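(* Let $\varepsilon\in\{1,-1\}$, let $\mathbb{M}^2(\varepsilon)$ be $\mathbb{S}^2$ if $\varepsilon=1$ and $\mathbb{H}^2$ if $\varepsilon=-1$, and let $\psi:S\to\mathbb{M}^2(\varepsilon)\times\mathbb{R}$ be an immersed surface with constant extrinsic curvature $K>0$, normal $N$ chosen so that $II$ is positive definite. For a local conformal parameter $z$ of $II$, with $I=E\,dz^2+2F|dz|^2+\bar E\,d\bar z^2$, define $Q=E+g(\nu)h_z^2$. Then $$|Q_{\bar z}|^2\le\frac{K\,g'(\nu)^2(1-\nu^2)^2|h_z|^2}{4\chi(\nu)}\,|Q|^2.$$
   Context: $\mathbb{M}^2(\varepsilon)\times\mathbb{R}$ carries the product metric; $h$ is the height function, $\nu=\langle N,\partial_t\rangle$. The real analytic functions $g,\chi$ are $$g(\nu)=\frac{\nu^2-1+\varepsilon K\left(e^{\varepsilon(1-\nu^2)/K}-1\right)}{(1-\nu^2)^2},\qquad \chi(\nu)=\frac{\varepsilon K\left(e^{\varepsilon(1-\nu^2)/K}-1\right)}{1-\nu^2}$$ (extended analytically to $\nu=\pm1$; $\chi>0$ on $[-1,1]$). $Q\,dz^2$ is the $(2,0)$-part, with respect to the conformal structure of $II$, of the quadratic form $A=I+g(\nu)\,dh^2$. *)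

theory Defs
  imports "HOL-Analysis.Analysis"
begin

text \<open>Partial derivatives w.r.t. the real coordinates x, y of the parameter z = x + i y.
  False = d/dx, True = d/dy.\<close>
definition partial :: "bool \<Rightarrow> (complex \<Rightarrow> 'a::real_normed_vector) \<Rightarrow> complex \<Rightarrow> 'a" where
  "partial d f p = frechet_derivative f (at p) (if d then \<i> else 1)"

fun pd :: "bool list \<Rightarrow> (complex \<Rightarrow> 'a::real_normed_vector) \<Rightarrow> complex \<Rightarrow> 'a" where
  "pd [] f = f"
| "pd (d # ds) f = partial d (pd ds f)"

definition smooth_on :: "complex set \<Rightarrow> (complex \<Rightarrow> 'a::real_normed_vector) \<Rightarrow> bool" where
  "smooth_on U f \<longleftrightarrow> (\<forall>ds. \<forall>p\<in>U. pd ds f differentiable (at p))"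

text \<open>Ambient model: M2(1) = unit sphere in R^3, M2(-1) = upper sheet of the hyperboloid
  in Lorentz space (metric dx1^2+dx2^2-dx3^2); the last coordinate is the R factor.\<close>
definition amb :: "real \<Rightarrow> real^4 \<Rightarrow> real^4 \<Rightarrow> real" where
  "amb \<epsilon> u v = (u $ 1)*(v $ 1) + (u $ 2)*(v $ 2) + \<epsilon>*(u $ 3)*(v $ 3) + (u $ 4)*(v $ 4)"

definition amb3 :: "real \<Rightarrow> real^4 \<Rightarrow> real^4 \<Rightarrow> real" where
  "amb3 \<epsilon> u v = (u $ 1)*(v $ 1) + (u $ 2)*(v $ 2) + \<epsilon>*(u $ 3)*(v $ 3)"

definition in_M2R :: "real \<Rightarrow> real^4 \<Rightarrow> bool" where
  "in_M2R \<epsilon> q \<longleftrightarrow> amb3 \<epsilon> q q = \<epsilon> \<and> (\<epsilon> = -1 \<longrightarrow> (q $ 3) > 0)"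

text \<open>The analytic functions g and chi, extended at nu = +-1 by their limits.\<close>
definition gfun :: "real \<Rightarrow> real \<Rightarrow> real \<Rightarrow> real" where
  "gfun \<epsilon> K \<nu> = (if \<nu>^2 = 1 then \<epsilon> / (2*K)
     else (\<nu>^2 - 1 + \<epsilon>*K*(exp (\<epsilon>*(1-\<nu>^2)/K) - 1)) / (1-\<nu>^2)^2)"

definition chi :: "real \<Rightarrow> real \<Rightarrow> real \<Rightarrow> real" where
  "chi \<epsilon> K \<nu> = (if \<nu>^2 = 1 then 1
     else \<epsilon>*K*(exp (\<epsilon>*(1-\<nu>^2)/K) - 1) / (1-\<nu>^2))"

definition fundI :: "real \<Rightarrow> (complex \<Rightarrow> real^4) \<Rightarrow> bool \<Rightarrow> bool \<Rightarrow> complex \<Rightarrow> real" where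
  "fundI \<epsilon> \<psi> i j p = amb \<epsilon> (partial i \<psi> p) (partial j \<psi> p)"

definition fundII :: "real \<Rightarrow> (complex \<Rightarrow> real^4) \<Rightarrow> (complex \<Rightarrow> real^4) \<Rightarrow> bool \<Rightarrow> bool \<Rightarrow> complex \<Rightarrow> real" where
  "fundII \<epsilon> \<psi> N i j p = - amb \<epsilon> (partial i \<psi> p) (partial j N p)"

text \<open>E = I(d/dz, d/dz) where d/dz = (d/dx - i d/dy)/2.\<close>
definition Ecoef :: "real \<Rightarrow> (complex \<Rightarrow> real^4) \<Rightarrow> complex \<Rightarrow> complex" where
  "Ecoef \<epsilon> \<psi> p = Complex ((fundI \<epsilon> \<psi> False False p - fundI \<epsilon> \<psi> True True p) / 4)
                             (- fundI \<epsilon> \<psi> False True p / 2)"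

definition height :: "(complex \<Rightarrow> real^4) \<Rightarrow> complex \<Rightarrow> real" where
  "height \<psi> p = \<psi> p $ 4"

definition h_z :: "(complex \<Rightarrow> real^4) \<Rightarrow> complex \<Rightarrow> complex" where
  "h_z \<psi> p = Complex (partial False (height \<psi>) p / 2) (- partial True (height \<psi>) p / 2)"

definition nu :: "(complex \<Rightarrow> real^4) \<Rightarrow> complex \<Rightarrow> real" where
  "nu N p = N p $ 4"

definition Qfun :: "real \<Rightarrow> real \<Rightarrow> (complex \<Rightarrow> real^4) \<Rightarrow> (complex \<Rightarrow> real^4) \<Rightarrow> complex \<Rightarrow> complex" where
  "Qfun \<epsilon> K \<psi> N p = Ecoef \<epsilon> \<psi> p + complex_of_real (gfun \<epsilon> K (nu N p)) * (h_z \<psi> p)^2"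

definition d_zbar :: "(complex \<Rightarrow> complex) \<Rightarrow> complex \<Rightarrow> complex" where
  "d_zbar F p = (partial False F p + \<i> * partial True F p) / 2"

end

theory Submission
  imports Defs "HOL-Real_Asymp.Real_Asymp"
begin
definition dir :: "bool \<Rightarrow> complex" where "dir d = (if d then \<i> else 1)"

lemma partial_frechet: "partial d f p = frechet_derivative f (at p) (dir d)"
  by (simp add: partial_def dir_def)

lemma partial_has: "(f has_derivative D) (at p) \<Longrightarrow> partial d f p = D (dir d)"
  unfolding partial_frechet using frechet_derivative_at by metis

lemma partial_local:
  assumes "open U" "p \<in> U" "\<And>q. q \<in> U \<Longrightarrow> f q = g q"
  shows "partial d f p = partial d g p"
proof -
  have "\<And>D. (f has_derivative D) (at p) \<longleftrightarrow> (g has_derivative D) (at p)"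
    using has_derivative_transform_within_open assms by metis
  then show ?thesis unfolding partial_def frechet_derivative_def by simp
qed

lemma pd_append: "pd (ds @ [d]) f = pd ds (partial d f)"
  by (induction ds) auto

lemma smooth_diff: "smooth_on U f \<Longrightarrow> p \<in> U \<Longrightarrow> pd ds f differentiable (at p)"
  unfolding smooth_on_def by blast

lemma smooth_partial: "smooth_on U f \<Longrightarrow> smooth_on U (partial d f)"
  unfolding smooth_on_def by (metis pd_append)

lemma smooth_diff0: "smooth_on U f \<Longrightarrow> p \<in> U \<Longrightarrow> f differentiable (at p)"
  using smooth_diff[of U f p "[]"] by simp

lemma has_frechet: "f differentiable (at p) \<Longrightarrow> (f has_derivative frechet_derivative f (at p)) (at p)"
  by (simp add: frechet_derivative_works)

lemma partial_nth:
  fixes f :: "complex \<Rightarrow> real^'n"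
  assumes "f differentiable (at p)"
  shows "partial d (\<lambda>q. f q $ k) p = partial d f p $ k"
proof -
  have "((\<lambda>q. f q $ k) has_derivative (\<lambda>v. frechet_derivative f (at p) v $ k)) (at p)"
    using bounded_linear.has_derivative[OF bounded_linear_vec_nth has_frechet[OF assms]] .
  from partial_has[OF this] show ?thesis by (simp add: partial_frechet)
qed

lemma diff_nth:
  fixes f :: "complex \<Rightarrow> real^'n"
  assumes "f differentiable (at p)"
  shows "(\<lambda>q. f q $ k) differentiable (at p)"
  using bounded_linear.has_derivative[OF bounded_linear_vec_nth has_frechet[OF assms]]
  unfolding differentiable_def by blast

lemma partial_mult:
  fixes f g :: "complex \<Rightarrow> real"
  assumes "f differentiable (at p)" "g differentiable (at p)"
  shows "partial d (\<lambda>q. f q * g q) p = partial d f p * g p + f p * partial d g p"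
proof -
  have "((\<lambda>q. f q * g q) has_derivative (\<lambda>v. f p * frechet_derivative g (at p) v + frechet_derivative f (at p) v * g p)) (at p)"
    by (rule has_derivative_mult[OF has_frechet[OF assms(1)] has_frechet[OF assms(2)]])
  from partial_has[OF this] show ?thesis by (simp add: partial_frechet)
qed

lemma partial_add:
  fixes f g :: "complex \<Rightarrow> 'a::real_normed_vector"
  assumes "f differentiable (at p)" "g differentiable (at p)"
  shows "partial d (\<lambda>q. f q + g q) p = partial d f p + partial d g p"
  using partial_has[OF has_derivative_add[OF has_frechet[OF assms(1)] has_frechet[OF assms(2)]]]
  by (simp add: partial_frechet)

lemma partial_diff:
  fixes f g :: "complex \<Rightarrow> 'a::real_normed_vector"
  assumes "f differentiable (at p)" "g differentiable (at p)"
  shows "partial d (\<lambda>q. f q - g q) p = partial d f p - partial d g p"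
  using partial_has[OF has_derivative_diff[OF has_frechet[OF assms(1)] has_frechet[OF assms(2)]]]
  by (simp add: partial_frechet)

lemma partial_cmult:
  fixes f :: "complex \<Rightarrow> real"
  assumes "f differentiable (at p)"
  shows "partial d (\<lambda>q. c * f q) p = c * partial d f p"
  using partial_has[OF has_derivative_mult_right[OF has_frechet[OF assms(1)]]]
  by (simp add: partial_frechet)

lemma line_DERIV:
  fixes f :: "complex \<Rightarrow> real"
  assumes "f differentiable (at (q + of_real s * dir d))"
  shows "((\<lambda>t. f (q + of_real t * dir d)) has_real_derivative partial d f (q + of_real s * dir d)) (at s)"
proof -
  let ?D = "frechet_derivative f (at (q + of_real s * dir d))"
  have l: "((\<lambda>t. q + of_real t * dir d) has_derivative (\<lambda>t. of_real t * dir d)) (at s)"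
    by (auto intro!: derivative_eq_intros)
  have "((\<lambda>t. f (q + of_real t * dir d)) has_derivative (\<lambda>t. ?D (of_real t * dir d))) (at s)"
    using has_derivative_compose[OF l has_frechet[OF assms]] by (simp add: o_def)
  moreover have bl: "bounded_linear ?D" using has_frechet[OF assms] has_derivative_bounded_linear by blast
  then have "\<And>t. ?D (of_real t * dir d) = ?D (dir d) * t"
  proof -
    fix t
    have "?D (of_real t * dir d) = ?D (t *\<^sub>R dir d)" by (simp add: scaleR_conv_of_real)
    also have "\<dots> = t *\<^sub>R ?D (dir d)" by (rule linear_scale[OF bounded_linear.linear[OF bl]])
    finally show "?D (of_real t * dir d) = ?D (dir d) * t" by simp
  qed
  ultimately have "((\<lambda>t. f (q + of_real t * dir d)) has_derivative (\<lambda>t. ?D (dir d) * t)) (at s)"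
    by simp
  then show ?thesis unfolding has_field_derivative_def partial_frechet by simp
qed

lemma mvt_line:
  fixes f :: "complex \<Rightarrow> real"
  assumes h: "h > 0" and df: "\<And>s. 0 \<le> s \<Longrightarrow> s \<le> h \<Longrightarrow> f differentiable (at (q + of_real s * dir d))"
  shows "\<exists>s. 0 < s \<and> s < h \<and> f (q + of_real h * dir d) - f q = h * partial d f (q + of_real s * dir d)"
proof -
  let ?g = "\<lambda>t. f (q + of_real t * dir d)"
  have D: "\<And>s. 0 \<le> s \<Longrightarrow> s \<le> h \<Longrightarrow> (?g has_real_derivative partial d f (q + of_real s * dir d)) (at s)"
    using line_DERIV df by blast
  have "continuous_on {0..h} ?g"
  proof (rule continuous_at_imp_continuous_on, intro ballI)
    fix x assume "x \<in> {0..h}"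
    then show "isCont ?g x" using DERIV_isCont[OF D[of x]] by simp
  qed
  moreover have "\<forall>x. 0 < x \<and> x < h \<longrightarrow> ?g differentiable (at x)"
    using D real_differentiable_def by (meson less_imp_le)
  ultimately obtain l z where z: "0 < z" "z < h" "(?g has_real_derivative l) (at z)" "?g h - ?g 0 = (h - 0) * l"
    using MVT[OF h] by blast
  have "l = partial d f (q + of_real z * dir d)" using DERIV_unique[OF z(3) D] z by simp
  then show ?thesis using z by (intro exI[of _ z]) auto
qed

lemma partial_shift:
  fixes f :: "complex \<Rightarrow> 'a::real_normed_vector"
  assumes "f differentiable (at (z + c))"
  shows "partial d (\<lambda>w. f (w + c)) z = partial d f (z + c)"
    and "(\<lambda>w. f (w + c)) differentiable (at z)"
proof -
  have l: "((\<lambda>w. w + c) has_derivative (\<lambda>w. w)) (at z)" by (auto intro!: derivative_eq_intros)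
  have "((\<lambda>w. f (w + c)) has_derivative frechet_derivative f (at (z + c))) (at z)"
    using has_derivative_compose[OF l has_frechet[OF assms]] by (simp add: o_def)
  then show "partial d (\<lambda>w. f (w + c)) z = partial d f (z + c)"
    "(\<lambda>w. f (w + c)) differentiable (at z)"
    using partial_has partial_frechet differentiable_def by metis+
qed

lemma schwarz_box:
  fixes f :: "complex \<Rightarrow> real"
  assumes h: "h > 0"
   and d0: "\<And>s t. 0 \<le> s \<Longrightarrow> s \<le> h \<Longrightarrow> 0 \<le> t \<Longrightarrow> t \<le> h \<Longrightarrow> f differentiable (at (p + of_real s + of_real t * \<i>))"
   and dx: "\<And>s t. 0 \<le> s \<Longrightarrow> s \<le> h \<Longrightarrow> 0 \<le> t \<Longrightarrow> t \<le> h \<Longrightarrow> partial False f differentiable (at (p + of_real s + of_real t * \<i>))"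
   and dy: "\<And>s t. 0 \<le> s \<Longrightarrow> s \<le> h \<Longrightarrow> 0 \<le> t \<Longrightarrow> t \<le> h \<Longrightarrow> partial True f differentiable (at (p + of_real s + of_real t * \<i>))"
  shows "\<exists>s1 t1 s2 t2. 0 < s1 \<and> s1 < h \<and> 0 < t1 \<and> t1 < h \<and> 0 < s2 \<and> s2 < h \<and> 0 < t2 \<and> t2 < h \<and>
     partial True (partial False f) (p + of_real s1 + of_real t1 * \<i>) =
     partial False (partial True f) (p + of_real s2 + of_real t2 * \<i>)"
proof -
  define \<Delta> where "\<Delta> = f (p + of_real h + of_real h * \<i>) - f (p + of_real h) - f (p + of_real h * \<i>) + f p"
  define g where "g = (\<lambda>z. f (z + of_real h * \<i>) - f z)"
  have dg: "g differentiable (at (p + of_real s))" 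
    and pg: "partial False g (p + of_real s) = partial False f (p + of_real s + of_real h * \<i>) - partial False f (p + of_real s)"
    if "0 \<le> s" "s \<le> h" for s
  proof -
    have a: "f differentiable (at (p + of_real s + of_real h * \<i>))" using d0[of s h] that h by simp
    have b: "f differentiable (at (p + of_real s))" using d0[of s 0] that h by simp
    have c: "(\<lambda>w. f (w + of_real h * \<i>)) differentiable (at (p + of_real s))" using partial_shift(2)[OF a] .
    show "g differentiable (at (p + of_real s))" unfolding g_def using c b by (intro differentiable_diff)
    show "partial False g (p + of_real s) = partial False f (p + of_real s + of_real h * \<i>) - partial False f (p + of_real s)"
      unfolding g_def using partial_diff[OF c b] partial_shift(1)[OF a] by simp
  qed
  obtain s1 where s1: "0 < s1" "s1 < h" "g (p + of_real h * dir False) - g p = h * partial False g (p + of_real s1 * dir False)"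
    using mvt_line[of h g p False] h dg by (auto simp: dir_def)
  have e1: "\<Delta> = h * (partial False f (p + of_real s1 + of_real h * \<i>) - partial False f (p + of_real s1))"
  proof -
    have "\<Delta> = g (p + of_real h * dir False) - g p" by (simp add: \<Delta>_def g_def dir_def algebra_simps)
    then show ?thesis using s1(3) pg[of s1] s1 by (simp add: dir_def)
  qed
  obtain t1 where t1: "0 < t1" "t1 < h" "partial False f ((p + of_real s1) + of_real h * dir True) - partial False f (p + of_real s1)
      = h * partial True (partial False f) ((p + of_real s1) + of_real t1 * dir True)"
    using mvt_line[of h "partial False f" "p + of_real s1" True] h dx s1 by (auto simp: dir_def)
  define g2 where "g2 = (\<lambda>z. f (z + of_real h) - f z)"
  have dg2: "g2 differentiable (at (p + of_real t * \<i>))" 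
    and pg2: "partial True g2 (p + of_real t * \<i>) = partial True f (p + of_real t * \<i> + of_real h) - partial True f (p + of_real t * \<i>)"
    if "0 \<le> t" "t \<le> h" for t
  proof -
    have a: "f differentiable (at (p + of_real t * \<i> + of_real h))" using d0[of h t] that h by (simp add: algebra_simps)
    have b: "f differentiable (at (p + of_real t * \<i>))" using d0[of 0 t] that h by simp
    have c: "(\<lambda>w. f (w + of_real h)) differentiable (at (p + of_real t * \<i>))" using partial_shift(2)[OF a] .
    show "g2 differentiable (at (p + of_real t * \<i>))" unfolding g2_def using c b by (intro differentiable_diff)
    show "partial True g2 (p + of_real t * \<i>) = partial True f (p + of_real t * \<i> + of_real h) - partial True f (p + of_real t * \<i>)"
      unfolding g2_def using partial_diff[OF c b] partial_shift(1)[OF a] by simp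
  qed
  obtain t2 where t2: "0 < t2" "t2 < h" "g2 (p + of_real h * dir True) - g2 p = h * partial True g2 (p + of_real t2 * dir True)"
    using mvt_line[of h g2 p True] h dg2 by (auto simp: dir_def)
  have e2: "\<Delta> = h * (partial True f (p + of_real t2 * \<i> + of_real h) - partial True f (p + of_real t2 * \<i>))"
  proof -
    have "\<Delta> = g2 (p + of_real h * dir True) - g2 p" by (simp add: \<Delta>_def g2_def dir_def algebra_simps)
    then show ?thesis using t2(3) pg2[of t2] t2 by (simp add: dir_def)
  qed
  obtain s2 where s2: "0 < s2" "s2 < h" "partial True f ((p + of_real t2 * \<i>) + of_real h * dir False) - partial True f (p + of_real t2 * \<i>)
      = h * partial False (partial True f) ((p + of_real t2 * \<i>) + of_real s2 * dir False)"
    using mvt_line[of h "partial True f" "p + of_real t2 * \<i>" False] h dy t2 by (auto simp: dir_def algebra_simps)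
  have "h * (h * partial True (partial False f) (p + of_real s1 + of_real t1 * \<i>)) =
        h * (h * partial False (partial True f) (p + of_real s2 + of_real t2 * \<i>))"
  proof -
    have "\<Delta> = h * (h * partial True (partial False f) (p + of_real s1 + of_real t1 * \<i>))"
      using e1 t1(3) by (simp add: dir_def)
    moreover have "\<Delta> = h * (h * partial False (partial True f) (p + of_real s2 + of_real t2 * \<i>))"
      using e2 s2(3) by (simp add: dir_def algebra_simps)
    ultimately show ?thesis by (rule trans[OF sym])
  qed
  then have "partial True (partial False f) (p + of_real s1 + of_real t1 * \<i>) =
        partial False (partial True f) (p + of_real s2 + of_real t2 * \<i>)" using h by simp
  then show ?thesis using s1 t1 s2 t2 by blast
qed

lemma norm_st: "cmod (of_real s + of_real t * \<i>) \<le> \<bar>s\<bar> + \<bar>t\<bar>"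
  using norm_triangle_ineq[of "of_real s" "of_real t * \<i>"] by (simp add: norm_mult)

lemma schwarz_real:
  fixes f :: "complex \<Rightarrow> real"
  assumes U: "open U" "p \<in> U"
   and d0: "\<And>q. q \<in> U \<Longrightarrow> f differentiable (at q)"
   and dx: "\<And>q. q \<in> U \<Longrightarrow> partial False f differentiable (at q)"
   and dy: "\<And>q. q \<in> U \<Longrightarrow> partial True f differentiable (at q)"
   and c1: "isCont (partial True (partial False f)) p"
   and c2: "isCont (partial False (partial True f)) p"
  shows "partial True (partial False f) p = partial False (partial True f) p"
proof (rule ccontr)
  let ?A = "partial True (partial False f) p" and ?B = "partial False (partial True f) p"
  assume ne: "?A \<noteq> ?B"
  define e where "e = \<bar>?A - ?B\<bar> / 2"
  have e: "e > 0" using ne by (simp add: e_def)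
  obtain r where r: "r > 0" "ball p r \<subseteq> U" using U open_contains_ball by blast
  obtain d1 where d1: "d1 > 0" "\<And>x. x \<noteq> p \<and> norm (x - p) < d1 \<Longrightarrow> norm (partial True (partial False f) x - ?A) < e"
    using LIM_D[OF c1[unfolded isCont_def] e] by blast
  obtain d2 where d2: "d2 > 0" "\<And>x. x \<noteq> p \<and> norm (x - p) < d2 \<Longrightarrow> norm (partial False (partial True f) x - ?B) < e"
    using LIM_D[OF c2[unfolded isCont_def] e] by blast
  define h where "h = min r (min d1 d2) / 4"
  have h: "h > 0" using r d1 d2 by (simp add: h_def)
  have inU: "p + of_real s + of_real t * \<i> \<in> U" if "0 \<le> s" "s \<le> h" "0 \<le> t" "t \<le> h" for s t
  proof -
    have "cmod (of_real s + of_real t * \<i>) < r"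
      using norm_st[of s t] that h_def r d1 d2 by (simp add: min_def split: if_splits)
    then have "p + of_real s + of_real t * \<i> \<in> ball p r" by (simp add: dist_norm add.assoc) (metis minus_add_distrib norm_minus_cancel diff_conv_add_uminus)
    then show ?thesis using r(2) by blast
  qed
  obtain s1 t1 s2 t2 where st: "0 < s1" "s1 < h" "0 < t1" "t1 < h" "0 < s2" "s2 < h" "0 < t2" "t2 < h"
    and eq: "partial True (partial False f) (p + of_real s1 + of_real t1 * \<i>) =
     partial False (partial True f) (p + of_real s2 + of_real t2 * \<i>)"
    using schwarz_box[of h f p] h inU d0 dx dy by blast
  have n1: "norm ((p + of_real s1 + of_real t1 * \<i>) - p) < d1"
    using norm_st[of s1 t1] st h_def d1 r d2 by (simp add: add.assoc min_def split: if_splits)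
  have n2: "norm ((p + of_real s2 + of_real t2 * \<i>) - p) < d2"
    using norm_st[of s2 t2] st h_def d1 r d2 by (simp add: add.assoc min_def split: if_splits)
  have ne1: "p + of_real s1 + of_real t1 * \<i> \<noteq> p" using st by (simp add: add.assoc complex_eq_iff)
  have ne2: "p + of_real s2 + of_real t2 * \<i> \<noteq> p" using st by (simp add: add.assoc complex_eq_iff)
  have "\<bar>partial True (partial False f) (p + of_real s1 + of_real t1 * \<i>) - ?A\<bar> < e" using d1(2) n1 ne1 by auto
  moreover have "\<bar>partial False (partial True f) (p + of_real s2 + of_real t2 * \<i>) - ?B\<bar> < e" using d2(2) n2 ne2 by auto
  ultimately show False using eq e_def by (auto simp: abs_if split: if_splits)
qed

lemma diff_local:
  assumes "open U" "p \<in> U" "\<And>q. q \<in> U \<Longrightarrow> f q = g q" "g differentiable (at p)"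
  shows "f differentiable (at p)"
  using assms has_derivative_transform_within_open unfolding differentiable_def by metis

lemma partial_nth_fun:
  fixes f :: "complex \<Rightarrow> real^'n"
  assumes "open U" "\<And>q. q \<in> U \<Longrightarrow> f differentiable (at q)" "q \<in> U"
  shows "partial d (\<lambda>q. f q $ k) q = partial d f q $ k"
  using partial_nth assms by blast

lemma smooth_nth:
  fixes f :: "complex \<Rightarrow> real^'n"
  assumes U: "open U" and sm: "smooth_on U f" and q: "q \<in> U"
  shows "(\<lambda>q. f q $ k) differentiable (at q)"
    and "partial d (\<lambda>q. f q $ k) q = partial d f q $ k"
    and "partial d (\<lambda>q. f q $ k) differentiable (at q)"
    and "partial e (partial d (\<lambda>q. f q $ k)) q = partial e (partial d f) q $ k"
    and "partial e (partial d (\<lambda>q. f q $ k)) differentiable (at q)"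
proof -
  have d0: "\<And>q. q \<in> U \<Longrightarrow> f differentiable (at q)" using smooth_diff0[OF sm] by blast
  have d1: "\<And>q. q \<in> U \<Longrightarrow> partial d f differentiable (at q)" using smooth_diff0[OF smooth_partial[OF sm]] by blast
  have d2: "\<And>q. q \<in> U \<Longrightarrow> partial e (partial d f) differentiable (at q)"
    using smooth_diff0[OF smooth_partial[OF smooth_partial[OF sm]]] by blast
  have e1: "\<And>q. q \<in> U \<Longrightarrow> partial d (\<lambda>q. f q $ k) q = partial d f q $ k" using partial_nth d0 by blast
  have e2: "\<And>q. q \<in> U \<Longrightarrow> partial e (partial d (\<lambda>q. f q $ k)) q = partial e (partial d f) q $ k"
  proof -
    fix q assume q: "q \<in> U"
    have "partial e (partial d (\<lambda>q. f q $ k)) q = partial e (\<lambda>q. partial d f q $ k) q"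
      by (rule partial_local[OF U q e1])
    also have "\<dots> = partial e (partial d f) q $ k" using partial_nth d1 q by blast
    finally show "partial e (partial d (\<lambda>q. f q $ k)) q = partial e (partial d f) q $ k" .
  qed
  show "(\<lambda>q. f q $ k) differentiable (at q)" using diff_nth d0 q by blast
  show "partial d (\<lambda>q. f q $ k) q = partial d f q $ k" using e1 q by blast
  show "partial d (\<lambda>q. f q $ k) differentiable (at q)"
    using diff_local[OF U q, of "partial d (\<lambda>q. f q $ k)" "\<lambda>q. partial d f q $ k"] e1 diff_nth[OF d1[OF q]] by blast
  show "partial e (partial d (\<lambda>q. f q $ k)) q = partial e (partial d f) q $ k" using e2 q by blast
  show "partial e (partial d (\<lambda>q. f q $ k)) differentiable (at q)"
    using diff_local[OF U q, of "partial e (partial d (\<lambda>q. f q $ k))" "\<lambda>q. partial e (partial d f) q $ k"] e2 diff_nth[OF d2[OF q]] by blast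
qed

lemma schwarz_smooth:
  fixes f :: "complex \<Rightarrow> real^'n"
  assumes U: "open U" and sm: "smooth_on U f" and p: "p \<in> U"
  shows "partial True (partial False f) p = partial False (partial True f) p"
proof (subst vec_eq_iff, intro allI)
  fix k
  let ?g = "\<lambda>q. f q $ k"
  have "partial True (partial False ?g) p = partial False (partial True ?g) p"
  proof (rule schwarz_real[OF U p])
    show "\<And>q. q \<in> U \<Longrightarrow> ?g differentiable (at q)" using smooth_nth(1)[OF U sm] by blast
    show "\<And>q. q \<in> U \<Longrightarrow> partial False ?g differentiable (at q)" using smooth_nth(3)[OF U sm] by blast
    show "\<And>q. q \<in> U \<Longrightarrow> partial True ?g differentiable (at q)" using smooth_nth(3)[OF U sm] by blast
    show "isCont (partial True (partial False ?g)) p"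
      using smooth_nth(5)[OF U sm p] differentiable_imp_continuous_within by blast
    show "isCont (partial False (partial True ?g)) p"
      using smooth_nth(5)[OF U sm p] differentiable_imp_continuous_within by blast
  qed
  then show "partial True (partial False f) p $ k = partial False (partial True f) p $ k"
    using smooth_nth(4)[OF U sm p] by simp
qed

lemma amb_bilinear: "bilinear (amb \<epsilon>)"
  unfolding bilinear_def amb_def
  by (auto intro!: linearI simp: algebra_simps)

lemma amb_bb: "bounded_bilinear (amb \<epsilon>)"
  using amb_bilinear bilinear_conv_bounded_bilinear by blast

lemma amb_sym: "amb \<epsilon> u v = amb \<epsilon> v u"
  by (simp add: amb_def algebra_simps)

lemma amb_has:
  assumes "(F has_derivative F') (at p)" "(G has_derivative G') (at p)"
  shows "((\<lambda>q. amb \<epsilon> (F q) (G q)) has_derivative (\<lambda>v. amb \<epsilon> (F p) (G' v) + amb \<epsilon> (F' v) (G p))) (at p)"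
  using bounded_bilinear.FDERIV[OF amb_bb assms] .

lemma partial_amb:
  fixes F G :: "complex \<Rightarrow> real^4"
  assumes "F differentiable (at p)" "G differentiable (at p)"
  shows "partial d (\<lambda>q. amb \<epsilon> (F q) (G q)) p = amb \<epsilon> (partial d F p) (G p) + amb \<epsilon> (F p) (partial d G p)"
    and "(\<lambda>q. amb \<epsilon> (F q) (G q)) differentiable (at p)"
proof -
  have h: "((\<lambda>q. amb \<epsilon> (F q) (G q)) has_derivative (\<lambda>v. amb \<epsilon> (F p) (frechet_derivative G (at p) v) + amb \<epsilon> (frechet_derivative F (at p) v) (G p))) (at p)"
    by (rule amb_has[OF has_frechet[OF assms(1)] has_frechet[OF assms(2)]])
  show "partial d (\<lambda>q. amb \<epsilon> (F q) (G q)) p = amb \<epsilon> (partial d F p) (G p) + amb \<epsilon> (F p) (partial d G p)"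
    using partial_has[OF h] by (simp add: partial_frechet)
  show "(\<lambda>q. amb \<epsilon> (F q) (G q)) differentiable (at p)" using h differentiable_def by blast
qed

lemma frame:
  fixes v1 v2 v3 v4 w u :: "real^4"
  assumes eps: "\<epsilon> = 1 \<or> \<epsilon> = -1"
   and g: "amb \<epsilon> v1 v1 = a" "amb \<epsilon> v1 v2 = b" "amb \<epsilon> v2 v2 = c" "a*c - b^2 \<noteq> 0"
     "amb \<epsilon> v1 v3 = 0" "amb \<epsilon> v2 v3 = 0" "amb \<epsilon> v3 v3 = 1" "amb \<epsilon> v1 v4 = 0" "amb \<epsilon> v2 v4 = 0"
     "amb \<epsilon> v3 v4 = 0" "amb \<epsilon> v4 v4 = \<epsilon>"
  shows "amb \<epsilon> w u = (c * amb \<epsilon> w v1 * amb \<epsilon> u v1 - b * (amb \<epsilon> w v1 * amb \<epsilon> u v2 + amb \<epsilon> w v2 * amb \<epsilon> u v1)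
            + a * amb \<epsilon> w v2 * amb \<epsilon> u v2) / (a*c - b^2) + amb \<epsilon> w v3 * amb \<epsilon> u v3 + \<epsilon> * amb \<epsilon> w v4 * amb \<epsilon> u v4"
proof -
  define \<Phi> where "\<Phi> = (\<lambda>x::real^4. x$1 *\<^sub>R v1 + x$2 *\<^sub>R v2 + x$3 *\<^sub>R v3 + x$4 *\<^sub>R v4)"
  have lin: "linear \<Phi>" unfolding \<Phi>_def by (auto intro!: linearI simp: algebra_simps)
  have ambL: "amb \<epsilon> (\<Phi> x) y = x$1 * amb \<epsilon> v1 y + x$2 * amb \<epsilon> v2 y + x$3 * amb \<epsilon> v3 y + x$4 * amb \<epsilon> v4 y" for x y
    unfolding \<Phi>_def amb_def by (simp add: algebra_simps)
  have s: "amb \<epsilon> v2 v1 = b" "amb \<epsilon> v3 v1 = 0" "amb \<epsilon> v3 v2 = 0" "amb \<epsilon> v4 v1 = 0" "amb \<epsilon> v4 v2 = 0" "amb \<epsilon> v4 v3 = 0"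
    using g by (simp_all add: amb_sym)
  have inj: "inj \<Phi>"
  proof (subst linear_inj_iff_eq_0[OF lin], intro allI impI)
    fix x assume x0: "\<Phi> x = 0"
    have e: "amb \<epsilon> (\<Phi> x) y = 0" for y using x0 by (simp add: amb_def)
    have 1: "x$1 * a + x$2 * b = 0" using e[of v1] ambL[of x v1] g s by simp
    have 2: "x$1 * b + x$2 * c = 0" using e[of v2] ambL[of x v2] g s by simp
    have 3: "x$3 = 0" using e[of v3] ambL[of x v3] g s by simp
    have 4: "x$4 * \<epsilon> = 0" using e[of v4] ambL[of x v4] g s by simp
    have "x$1 * (a*c - b^2) = c*(x$1 * a + x$2 * b) - b*(x$1 * b + x$2 * c)" by (simp add: power2_eq_square algebra_simps)
    then have "x$1 * (a*c - b^2) = 0" using 1 2 by simp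
    then have x1: "x$1 = 0" using g(4) by simp
    have "x$2 * (a*c - b^2) = a*(x$1 * b + x$2 * c) - b*(x$1 * a + x$2 * b)" by (simp add: power2_eq_square algebra_simps)
    then have "x$2 * (a*c - b^2) = 0" using 1 2 by simp
    then have x2: "x$2 = 0" using g(4) by simp
    have x4: "x$4 = 0" using 4 eps by auto
    show "x = 0" using x1 x2 3 x4 by (simp add: vec_eq_iff forall_4)
  qed
  have "surj \<Phi>" using linear_injective_imp_surjective[OF lin inj] by simp
  then obtain x where w: "w = \<Phi> x" by (metis surjD)
  have 1: "amb \<epsilon> w v1 = x$1 * a + x$2 * b" using ambL[of x v1] g s w by simp
  have 2: "amb \<epsilon> w v2 = x$1 * b + x$2 * c" using ambL[of x v2] g s w by simp
  have 3: "amb \<epsilon> w v3 = x$3" using ambL[of x v3] g s w by simp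
  have 4: "amb \<epsilon> w v4 = x$4 * \<epsilon>" using ambL[of x v4] g s w by simp
  have A: "amb \<epsilon> w u = x$1 * amb \<epsilon> u v1 + x$2 * amb \<epsilon> u v2 + x$3 * amb \<epsilon> u v3 + x$4 * amb \<epsilon> u v4"
    using ambL[of x u] w amb_sym by metis
  have E: "\<epsilon> * \<epsilon> = 1" using eps by auto
  have key: "\<And>x1 x2 U1 U2::real. c * (x1 * a + x2 * b) * U1 - b * ((x1 * a + x2 * b) * U2 + (x1 * b + x2 * c) * U1)
            + a * (x1 * b + x2 * c) * U2 = (a*c - b^2) * (x1 * U1 + x2 * U2)"
    by (simp add: power2_eq_square algebra_simps)
  have e4: "\<epsilon> * (x$4 * \<epsilon>) * amb \<epsilon> u v4 = x$4 * amb \<epsilon> u v4" using E by (simp add: algebra_simps)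
  show ?thesis unfolding 1 2 3 4 key e4 using g(4) A by simp
qed

definition Gf :: "real \<Rightarrow> real" where
  "Gf t = (if t = 0 then 1/2 else (exp t - 1 - t) / t^2)"

lemma Gf_lim: "((\<lambda>y. ((exp y - 1 - y) / y^2 - 1/2) / y) \<longlongrightarrow> 1/6) (at (0::real))"
  by real_asymp

lemma Gf_deriv0: "(Gf has_real_derivative 1/6) (at 0)"
proof -
  have "((\<lambda>y. (Gf y - Gf 0) / (y - 0)) \<longlongrightarrow> 1/6) (at 0)"
  proof (rule Lim_transform_eventually[OF Gf_lim])
    show "\<forall>\<^sub>F y in at 0. ((exp y - 1 - y) / y^2 - 1/2) / y = (Gf y - Gf 0) / (y - 0)"
      by (auto simp: eventually_at_filter Gf_def)
  qed
  then show ?thesis by (simp add: has_field_derivative_iff)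
qed

lemma Gf_deriv:
  assumes "t \<noteq> 0"
  shows "(Gf has_real_derivative ((exp t - 1) * t - 2 * (exp t - 1 - t)) / t^3) (at t)"
proof -
  have "((\<lambda>y. (exp y - 1 - y) / y^2) has_real_derivative ((exp t - 1) * t - 2 * (exp t - 1 - t)) / t^3) (at t)"
    using assms by (auto intro!: derivative_eq_intros simp: field_simps power2_eq_square power3_eq_cube)
  then show ?thesis
  proof (rule has_field_derivative_transform_within_open[where S = "-{0}"])
    show "open (-{0::real})" by (simp add: open_Compl)
    show "t \<in> -{0}" using assms by simp
  qed (auto simp: Gf_def)
qed

lemma Gf_has: "\<exists>D. (Gf has_real_derivative D) (at t) \<and> (t \<noteq> 0 \<longrightarrow> D = ((exp t - 1) * t - 2 * (exp t - 1 - t)) / t^3)"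
  using Gf_deriv Gf_deriv0 by (cases "t = 0") auto

lemma epsK: "(\<epsilon>::real) = 1 \<or> \<epsilon> = -1 \<Longrightarrow> K > 0 \<Longrightarrow> \<epsilon> * K = 1 / (\<epsilon> / K)"
proof -
  assume e: "\<epsilon> = 1 \<or> \<epsilon> = -1" and K: "K > 0"
  then have "K \<noteq> 0" by simp
  then show ?thesis using e by (auto simp: field_simps)
qed

lemma auxg: "a \<noteq> 0 \<Longrightarrow> s \<noteq> (0::real) \<Longrightarrow> (-s + (1/a)*(E - 1))/s^2 = a * ((E - 1 - a * s)/(a * s)^2)"
  by (simp add: field_simps power2_eq_square)

lemma auxc: "s \<noteq> (0::real) \<Longrightarrow> c*(E - 1)/s = 1 + ((-s + c*(E-1))/s^2) * s"
  by (simp add: field_simps power2_eq_square)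

lemma gfun_Gf:
  assumes eps: "\<epsilon> = 1 \<or> \<epsilon> = -1" and K: "K > 0"
  shows "gfun \<epsilon> K \<nu> = (\<epsilon>/K) * Gf ((\<epsilon>/K) * (1 - \<nu>^2))"
proof (cases "\<nu>^2 = 1")
  case True then show ?thesis by (simp add: gfun_def Gf_def)
next
  case False
  define a where "a = \<epsilon>/K"
  have a0: "a \<noteq> 0" using eps K by (auto simp: a_def)
  have s0: "1 - \<nu>^2 \<noteq> 0" using False by simp
  have eK: "\<epsilon> * K = 1/a" using epsK[OF eps K] by (simp add: a_def)
  have "gfun \<epsilon> K \<nu> = (-(1-\<nu>^2) + (1/a) * (exp (a*(1-\<nu>^2)) - 1)) / (1-\<nu>^2)^2"
    using False unfolding gfun_def eK by (simp add: a_def)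
  also have "\<dots> = a * ((exp (a*(1-\<nu>^2)) - 1 - a*(1-\<nu>^2)) / (a*(1-\<nu>^2))^2)"
    by (rule auxg[OF a0 s0])
  also have "\<dots> = a * Gf (a * (1 - \<nu>^2))"
    using a0 s0 by (simp add: Gf_def)
  finally show ?thesis by (simp add: a_def)
qed

lemma chi_Gf:
  assumes eps: "\<epsilon> = 1 \<or> \<epsilon> = -1" and K: "K > 0"
  shows "chi \<epsilon> K \<nu> = 1 + gfun \<epsilon> K \<nu> * (1 - \<nu>^2)"
proof (cases "\<nu>^2 = 1")
  case True then show ?thesis by (simp add: chi_def gfun_def)
next
  case False
  have s0: "1 - \<nu>^2 \<noteq> 0" using False by simp
  show ?thesis using False auxc[OF s0, of "\<epsilon>*K" "exp (\<epsilon>*(1-\<nu>^2)/K)"]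
    by (simp add: chi_def gfun_def)
qed

lemma chi_pos:
  assumes eps: "\<epsilon> = 1 \<or> \<epsilon> = -1" and K: "K > 0"
  shows "chi \<epsilon> K \<nu> > 0"
proof (cases "\<nu>^2 = 1")
  case True then show ?thesis by (simp add: chi_def)
next
  case False
  define s where "s = 1 - \<nu>^2"
  have s0: "s \<noteq> 0" using False by (simp add: s_def)
  have "chi \<epsilon> K \<nu> = \<epsilon>*K*(exp (\<epsilon>* s/K) - 1) / s" using False by (simp add: chi_def s_def)
  moreover have "\<epsilon>*K*(exp (\<epsilon>* s/K) - 1) / s > 0"
  proof (cases "s > 0")
    case True
    show ?thesis using eps
    proof
      assume e: "\<epsilon> = 1"
      have "exp (s/K) > 1" using True K by simp
      then show ?thesis using e True K by (simp add: zero_less_divide_iff)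
    next
      assume e: "\<epsilon> = -1"
      have "exp (-(s/K)) - 1 < 0" using True K by simp
      then have "K * (exp (-(s/K)) - 1) < 0" using K by (simp add: mult_pos_neg)
      then show ?thesis using e True K by (simp add: divide_neg_pos)
    qed
  next
    case False
    then have sn: "s < 0" using s0 by simp
    show ?thesis using eps
    proof
      assume e: "\<epsilon> = 1"
      have "exp (s/K) < 1" using sn K by (simp add: divide_less_0_iff)
      then show ?thesis using e sn K by (simp add: zero_less_divide_iff mult_less_0_iff)
    next
      assume e: "\<epsilon> = -1"
      have "s / K < 0" using sn K by (simp add: divide_neg_pos)
      then have "exp (-(s/K)) - 1 > 0" by simp
      then have "K * (exp (-(s/K)) - 1) > 0" using K by simp
      then show ?thesis using e sn K by (simp add: divide_pos_neg)
    qed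
  qed
  ultimately show ?thesis by simp
qed

lemma gfun_deriv:
  assumes eps: "\<epsilon> = 1 \<or> \<epsilon> = -1" and K: "K > 0"
  shows "\<exists>D. (gfun \<epsilon> K has_real_derivative D) (at \<nu>) \<and>
           D * (1 - \<nu>^2) / 2 = \<nu> * (2 * gfun \<epsilon> K \<nu> - \<epsilon> * chi \<epsilon> K \<nu> / K)"
proof -
  define a where "a = \<epsilon>/K"
  have a0: "a \<noteq> 0" using eps K by (auto simp: a_def)
  have ea: "\<epsilon> / K = a" by (simp add: a_def)
  define t where "t = a * (1 - \<nu>^2)"
  obtain DG where DG: "(Gf has_real_derivative DG) (at t)"
    "t \<noteq> 0 \<longrightarrow> DG = ((exp t - 1) * t - 2 * (exp t - 1 - t)) / t^3" using Gf_has by blast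
  have geq: "gfun \<epsilon> K = (\<lambda>\<nu>. a * Gf (a * (1 - \<nu>^2)))" using gfun_Gf[OF eps K] by (auto simp: a_def)
  have inner: "((\<lambda>\<nu>. a * (1 - \<nu>^2)) has_real_derivative a * (- 2 * \<nu>)) (at \<nu>)"
    by (auto intro!: derivative_eq_intros)
  have "((\<lambda>\<nu>. a * Gf (a * (1 - \<nu>^2))) has_real_derivative a * (DG * (a * (- 2 * \<nu>)))) (at \<nu>)"
    using DERIV_chain2[OF DG(1)[unfolded t_def] inner] by (intro DERIV_cmult) 
  then have D: "(gfun \<epsilon> K has_real_derivative a * (DG * (a * (- 2 * \<nu>)))) (at \<nu>)" using geq by simp
  have chi: "chi \<epsilon> K \<nu> = 1 + gfun \<epsilon> K \<nu> * (1 - \<nu>^2)" by (rule chi_Gf[OF eps K])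
  have g: "gfun \<epsilon> K \<nu> = a * Gf t" using geq by (simp add: t_def)
  have "a * (DG * (a * (- 2 * \<nu>))) * (1 - \<nu>^2) / 2 = \<nu> * (2 * gfun \<epsilon> K \<nu> - \<epsilon> * chi \<epsilon> K \<nu> / K)"
  proof (cases "t = 0")
    case True
    then have s: "1 - \<nu>^2 = 0" using a0 by (simp add: t_def)
    show ?thesis unfolding chi g using s True by (simp add: Gf_def a_def)
  next
    case False
    have s: "1 - \<nu>^2 = t / a" using a0 by (simp add: t_def)
    have hc: "\<epsilon> * chi \<epsilon> K \<nu> / K = a * (1 + Gf t * t)" unfolding chi g s using a0 by (simp add: a_def)
    have aux: "\<And>E. t \<noteq> 0 \<Longrightarrow> a \<noteq> 0 \<Longrightarrow> a * (((E - 1) * t - 2 * (E - 1 - t)) / t^3 * (a * (- 2 * \<nu>))) * (t / a) / 2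
       = \<nu> * (2 * (a * ((E - 1 - t) / t^2)) - a * (1 + ((E - 1 - t) / t^2) * t))"
      by (simp add: field_simps power2_eq_square power3_eq_cube)
    show ?thesis unfolding g hc s using aux[OF False a0, of "exp t"] DG(2) False by (simp add: Gf_def)
  qed
  then show ?thesis using D by blast
qed

lemma amb3_amb: "amb3 \<epsilon> u v = amb \<epsilon> u v - u$4 * v$4"
  by (simp add: amb_def amb3_def)

definition pbar :: "real^4 \<Rightarrow> real^4" where "pbar v = (\<chi> i. if i = 4 then 0 else v $ i)"
definition e4 :: "real^4" where "e4 = (\<chi> i. if i = 4 then 1 else 0)"

lemma pbar_amb: "amb \<epsilon> (pbar v) w = amb3 \<epsilon> v w" "amb \<epsilon> w (pbar v) = amb3 \<epsilon> w v"
  by (simp_all add: pbar_def amb_def amb3_def)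

lemma e4_amb: "amb \<epsilon> e4 w = w $ 4" "amb \<epsilon> w e4 = w $ 4"
  by (simp_all add: e4_def amb_def)

lemma amb3_sym: "amb3 \<epsilon> u v = amb3 \<epsilon> v u" by (simp add: amb3_def algebra_simps)

lemma partial_amb3:
  fixes F G :: "complex \<Rightarrow> real^4"
  assumes "F differentiable (at p)" "G differentiable (at p)"
  shows "partial d (\<lambda>q. amb3 \<epsilon> (F q) (G q)) p = amb3 \<epsilon> (partial d F p) (G p) + amb3 \<epsilon> (F p) (partial d G p)"
proof -
  have e: "(\<lambda>q. amb3 \<epsilon> (F q) (G q)) = (\<lambda>q. amb \<epsilon> (F q) (G q) - F q $ 4 * G q $ 4)" by (simp add: amb3_amb)
  have d1: "(\<lambda>q. F q $ 4) differentiable (at p)" "(\<lambda>q. G q $ 4) differentiable (at p)" using diff_nth assms by blast+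
  have "partial d (\<lambda>q. amb \<epsilon> (F q) (G q) - F q $ 4 * G q $ 4) p
       = partial d (\<lambda>q. amb \<epsilon> (F q) (G q)) p - partial d (\<lambda>q. F q $ 4 * G q $ 4) p"
    by (rule partial_diff[OF partial_amb(2)[OF assms] differentiable_mult[OF d1]])
  also have "\<dots> = amb \<epsilon> (partial d F p) (G p) + amb \<epsilon> (F p) (partial d G p)
      - (partial d F p $ 4 * G p $ 4 + F p $ 4 * partial d G p $ 4)"
    using partial_amb(1)[OF assms] partial_mult[OF d1] partial_nth[OF assms(1)] partial_nth[OF assms(2)] by simp
  finally show ?thesis unfolding e by (simp add: amb3_amb)
qed

lemma partial_zero_on:
  assumes "open U" "p \<in> U" "\<And>q. q \<in> U \<Longrightarrow> f q = (c::real)"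
  shows "partial d f p = 0"
proof -
  have "partial d f p = partial d (\<lambda>q. c) p" by (rule partial_local[OF assms])
  also have "\<dots> = 0" using partial_has[OF has_derivative_const[of c "at p"], of d] by simp
  finally show ?thesis .
qed

lemma partial_Complex:
  fixes R J :: "complex \<Rightarrow> real"
  assumes "R differentiable (at p)" "J differentiable (at p)"
  shows "partial d (\<lambda>q. Complex (R q) (J q)) p = Complex (partial d R p) (partial d J p)"
proof -
  have r: "((\<lambda>q. of_real (R q) :: complex) has_derivative (\<lambda>v. of_real (frechet_derivative R (at p) v))) (at p)"
    using bounded_linear.has_derivative[OF bounded_linear_of_real has_frechet[OF assms(1)]] .
  have j: "((\<lambda>q. of_real (J q) :: complex) has_derivative (\<lambda>v. of_real (frechet_derivative J (at p) v))) (at p)"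
    using bounded_linear.has_derivative[OF bounded_linear_of_real has_frechet[OF assms(2)]] .
  have hd: "((\<lambda>q. of_real (R q) + \<i> * of_real (J q)) has_derivative
        (\<lambda>v. of_real (frechet_derivative R (at p) v) + \<i> * of_real (frechet_derivative J (at p) v))) (at p)"
    by (intro has_derivative_add r has_derivative_mult_right j)
  have "partial d (\<lambda>q. of_real (R q) + \<i> * of_real (J q)) p = Complex (partial d R p) (partial d J p)"
    using partial_has[OF hd, of d] by (simp add: partial_frechet complex_eq_iff)
  then show ?thesis by (simp add: Complex_eq)
qed

lemma partial_chain:
  fixes f :: "complex \<Rightarrow> real"
  assumes "(g has_real_derivative D) (at (f p))" "f differentiable (at p)"
  shows "partial d (\<lambda>q. g (f q)) p = D * partial d f p"
    and "(\<lambda>q. g (f q)) differentiable (at p)"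
proof -
  have "((\<lambda>q. g (f q)) has_derivative (\<lambda>v. D * frechet_derivative f (at p) v)) (at p)"
    using has_derivative_compose[OF has_frechet[OF assms(2)] assms(1)[unfolded has_field_derivative_def]]
    by (simp add: o_def mult.commute)
  then show "partial d (\<lambda>q. g (f q)) p = D * partial d f p"
    "(\<lambda>q. g (f q)) differentiable (at p)"
    using partial_has partial_frechet differentiable_def by metis+
qed

lemma poly_id:
  fixes p r t x y :: real
  shows "4 * (x*(t*x - r*y) + y*(p*y - r*x))^2 * ((p-t)^2 + 4*r^2) - 16 * (p*t - r^2) * ((t*x - r*y)*y - (p*y - r*x)*x)^2
       = ((p+t) * ((p-t)*(x^2-y^2) + 4*r*x*y) - ((p-t)^2 + 4*r^2) * (x^2+y^2))^2"
  by algebra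

lemma div_aux: "(D::real) \<noteq> 0 \<Longrightarrow> l = (A/D + B) - (C/D + E) \<Longrightarrow> l*D = A + B*D - C - E*D"
proof -
  assume h: "D \<noteq> 0" and e: "l = (A/D + B) - (C/D + E)"
  have "l*D = A/D*D + B*D - C/D*D - E*D" unfolding e by (simp add: algebra_simps)
  then show ?thesis using h by simp
qed

lemma codazzi_alg:
  fixes a b c lam K eps nu h1 h2 G111 G112 G121 G122 G221 G222 lamF lamT :: real
  assumes Dt: "a*c - b^2 \<noteq> 0" and lam: "lam \<noteq> 0" and lK: "lam^2 = K * (a*c - b^2)"
   and curvF: "2*lam*lamF = K*(2*G111*c + a*(2*G122) - 2*b*(G112 + G121))"
   and curvT: "2*lam*lamT = K*(2*G121*c + a*(2*G222) - 2*b*(G122 + G221))"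
   and codF: "lamF = ((c*(-lam)*G221 - b*((-lam)*G222 + 0*G221) + a*0*G222)/(a*c-b^2) + eps*(nu*h1)*(-(c - h2*h2)))
                   - ((c*0*G121 - b*(0*G122 + (-lam)*G121) + a*(-lam)*G122)/(a*c-b^2) + eps*(nu*h2)*(-(b - h1*h2)))"
   and codT: "lamT = ((c*0*G111 - b*(0*G112 + (-lam)*G111) + a*(-lam)*G112)/(a*c-b^2) + eps*(nu*h2)*(-(a - h1*h1)))
                   - ((c*(-lam)*G121 - b*((-lam)*G122 + 0*G121) + a*0*G122)/(a*c-b^2) + eps*(nu*h1)*(-(b - h1*h2)))"
  shows "(G111 + G221) * lam^2 = -eps*nu*lam*h1*(a*c-b^2) \<and> (G112 + G222) * lam^2 = -eps*nu*lam*h2*(a*c-b^2)"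
proof -
  define Dt where "Dt = a*c - b^2"
  have Dt0: "Dt \<noteq> 0" using Dt by (simp add: Dt_def)
  have K: "K * Dt = lam^2" using lK by (simp add: Dt_def)
  have eF: "lam * (c*(G111 + G221) - b*(G112 + G222)) = - Dt*eps*nu*(c*h1 - b*h2)"
  proof -
    have "2*lam*lamF*Dt = K*Dt*(2*G111*c + a*(2*G122) - 2*b*(G112 + G121))" using curvF by simp
    then have A: "2*lam*lamF*Dt = lam^2*(2*G111*c + a*(2*G122) - 2*b*(G112 + G121))" using K by simp
    have B: "lamF * Dt = -lam*(c*G221 - b*G222 + b*G121 - a*G122) - Dt*eps*nu*(c*h1 - b*h2)"
      using div_aux[OF Dt0 codF[folded Dt_def]] by (simp add: algebra_simps)
    have A': "2*lam*(lamF*Dt) = lam^2*(2*G111*c + a*(2*G122) - 2*b*(G112 + G121))" using A by (simp add: algebra_simps)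
    have "lam * (lam*(2*G111*c + a*(2*G122) - 2*b*(G112 + G121))) = lam * (2*(-lam*(c*G221 - b*G222 + b*G121 - a*G122) - Dt*eps*nu*(c*h1 - b*h2)))"
      using A'[unfolded B] by (simp add: power2_eq_square algebra_simps)
    then have "lam*(2*G111*c + a*(2*G122) - 2*b*(G112 + G121)) = 2*(-lam*(c*G221 - b*G222 + b*G121 - a*G122) - Dt*eps*nu*(c*h1 - b*h2))"
      using lam by simp
    then show ?thesis by (simp add: algebra_simps)
  qed
  have eT: "lam * (a*(G112 + G222) - b*(G111 + G221)) = - Dt*eps*nu*(a*h2 - b*h1)"
  proof -
    have "2*lam*lamT*Dt = K*Dt*(2*G121*c + a*(2*G222) - 2*b*(G122 + G221))" using curvT by simp
    then have A: "2*lam*lamT*Dt = lam^2*(2*G121*c + a*(2*G222) - 2*b*(G122 + G221))" using K by simp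
    have B: "lamT * Dt = -lam*(a*G112 - b*G111 - c*G121 + b*G122) - Dt*eps*nu*(a*h2 - b*h1)"
      using div_aux[OF Dt0 codT[folded Dt_def]] by (simp add: algebra_simps)
    have A': "2*lam*(lamT*Dt) = lam^2*(2*G121*c + a*(2*G222) - 2*b*(G122 + G221))" using A by (simp add: algebra_simps)
    have "lam * (lam*(2*G121*c + a*(2*G222) - 2*b*(G122 + G221))) = lam * (2*(-lam*(a*G112 - b*G111 - c*G121 + b*G122) - Dt*eps*nu*(a*h2 - b*h1)))"
      using A'[unfolded B] by (simp add: power2_eq_square algebra_simps)
    then have "lam*(2*G121*c + a*(2*G222) - 2*b*(G122 + G221)) = 2*(-lam*(a*G112 - b*G111 - c*G121 + b*G122) - Dt*eps*nu*(a*h2 - b*h1))"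
      using lam by simp
    then show ?thesis by (simp add: algebra_simps)
  qed
  define L1 where "L1 = G111 + G221"
  define L2 where "L2 = G112 + G222"
  have eF': "lam*c*L1 - lam*b*L2 = - Dt*eps*nu*(c*h1 - b*h2)" using eF by (simp add: L1_def L2_def algebra_simps)
  have eT': "lam*a*L2 - lam*b*L1 = - Dt*eps*nu*(a*h2 - b*h1)" using eT by (simp add: L1_def L2_def algebra_simps)
  have "Dt * (lam*L1) = a*(lam*c*L1 - lam*b*L2) + b*(lam*a*L2 - lam*b*L1)" by (simp add: Dt_def power2_eq_square algebra_simps)
  also have "\<dots> = Dt * (-Dt*eps*nu*h1)" unfolding eF' eT' by (simp add: Dt_def power2_eq_square algebra_simps)
  finally have 1: "lam*L1 = -Dt*eps*nu*h1" by (rule mult_left_cancel[THEN iffD1, OF Dt0])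
  have "Dt * (lam*L2) = c*(lam*a*L2 - lam*b*L1) + b*(lam*c*L1 - lam*b*L2)" by (simp add: Dt_def power2_eq_square algebra_simps)
  also have "\<dots> = Dt * (-Dt*eps*nu*h2)" unfolding eF' eT' by (simp add: Dt_def power2_eq_square algebra_simps)
  finally have 2: "lam*L2 = -Dt*eps*nu*h2" by (rule mult_left_cancel[THEN iffD1, OF Dt0])
  have "L1 * lam^2 = lam * (lam * L1)" by (simp add: power2_eq_square)
  then have "L1 * lam^2 = -eps*nu*lam*h1*Dt" using 1 by simp
  moreover have "L2 * lam^2 = lam * (lam * L2)" by (simp add: power2_eq_square)
  then have "L2 * lam^2 = -eps*nu*lam*h2*Dt" using 2 by simp
  ultimately show ?thesis by (simp add: L1_def L2_def Dt_def)
qed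

lemma canc: "(d::real) \<noteq> 0 \<Longrightarrow> x*d = y*d \<Longrightarrow> x = y" by simp

lemma final_alg:
  fixes a b c lam K eps nu h1 h2 g D chi L1 L2 S nu1 nu2 re im :: real
  assumes lK: "lam^2 = K * (a*c - b^2)" and lam: "lam > 0" and K: "K > 0"
   and chi: "chi = 1 + g*(1-nu^2)" and chipos: "chi > 0"
   and sD: "(1-nu^2)*(a*c - b^2) = c*h1^2 - 2*b*h1*h2 + a*h2^2"
   and ode: "D*(1-nu^2)/2 = nu*(2*g - eps*chi/K)"
   and L1: "L1*lam^2 = -eps*nu*lam*h1*(a*c-b^2)" and L2: "L2*lam^2 = -eps*nu*lam*h2*(a*c-b^2)"
   and S: "S*(a*c-b^2) = c*L1*h1 - b*(L1*h2 + L2*h1) + a*L2*h2 + 2*lam*nu*(a*c-b^2)"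
   and n1: "nu1*(a*c-b^2) = -lam*(c*h1 - b*h2)" and n2: "nu2*(a*c-b^2) = -lam*(a*h2 - b*h1)"
   and re: "re = L1/2 + D*(nu1*(h1^2-h2^2)/4 + nu2*h1*h2/2) + g*h1*S/2"
   and im: "im = -L2/2 + D*(nu2*(h1^2-h2^2)/4 - nu1*h1*h2/2) - g*h2*S/2"
  shows "(re/2)^2 + (im/2)^2 \<le> K*D^2*(1-nu^2)^2*((h1/2)^2+(h2/2)^2)/(4*chi)
           * (((a-c)/4 + g*(h1^2-h2^2)/4)^2 + (-b/2 - g*h1*h2/2)^2)"
proof -
  define Dt where "Dt = a*c - b^2"
  define s where "s = 1 - nu^2"
  define m where "m = -eps*nu*lam/K"
  define U1 where "U1 = c*h1 - b*h2"
  define U2 where "U2 = a*h2 - b*h1"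
  define C where "C = U1*h2 - U2*h1"
  define Q2 where "Q2 = ((a-c)/4 + g*(h1^2-h2^2)/4)^2 + (-b/2 - g*h1*h2/2)^2"
  have Dtpos: "Dt > 0"
  proof -
    have "K * Dt > 0" using lK lam unfolding Dt_def[symmetric] by (metis zero_less_power)
    then show ?thesis using K by (simp add: zero_less_mult_iff)
  qed
  have KDt: "K * Dt = lam^2" using lK by (simp add: Dt_def)
  have L1': "L1 = m*h1"
  proof -
    have "L1*(K*Dt) = -eps*nu*lam*h1*Dt" using L1 KDt by (simp add: Dt_def)
    then have "(L1*K)*Dt = (-eps*nu*lam*h1)*Dt" by (simp add: algebra_simps)
    then have "L1*K = -eps*nu*lam*h1" using canc Dtpos by (metis less_irrefl)
    then show ?thesis using K by (simp add: m_def field_simps)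
  qed
  have L2': "L2 = m*h2"
  proof -
    have "L2*(K*Dt) = -eps*nu*lam*h2*Dt" using L2 KDt by (simp add: Dt_def)
    then have "(L2*K)*Dt = (-eps*nu*lam*h2)*Dt" by (simp add: algebra_simps)
    then have "L2*K = -eps*nu*lam*h2" using canc Dtpos by (metis less_irrefl)
    then show ?thesis using K by (simp add: m_def field_simps)
  qed
  have sD': "s*Dt = h1*U1 + h2*U2" using sD by (simp add: s_def Dt_def U1_def U2_def power2_eq_square algebra_simps)
  have S': "S = m* s + 2*lam*nu"
  proof -
    have "S*Dt = m*(h1*U1 + h2*U2) + 2*lam*nu*Dt" using S unfolding Dt_def[symmetric] L1' L2'
      by (simp add: U1_def U2_def algebra_simps)
    also have "\<dots> = m*(s*Dt) + 2*lam*nu*Dt" unfolding sD' ..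
    also have "\<dots> = (m* s + 2*lam*nu)*Dt" by (simp add: algebra_simps)
    finally show ?thesis using Dtpos by simp
  qed
  have key: "m*chi + 2*g*lam*nu = lam*D* s/2"
  proof -
    have "lam*D* s/2 = lam*(nu*(2*g - eps*chi/K))" using ode by (simp add: s_def)
    then show ?thesis using K by (simp add: m_def field_simps)
  qed
  have chi': "chi = 1 + g* s" using chi by (simp add: s_def)
  have n1': "nu1 = -lam*U1/Dt" using n1 Dtpos by (simp add: U1_def Dt_def field_simps)
  have n2': "nu2 = -lam*U2/Dt" using n2 Dtpos by (simp add: U2_def Dt_def field_simps)
  have re': "re = lam*D*h2*C/(4*Dt)"
  proof -
    have "re = h1*(m*chi + 2*g*lam*nu)/2 + D*(nu1*(h1^2-h2^2)/4 + nu2*h1*h2/2)"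
      unfolding re L1' S' chi' by (simp add: algebra_simps)
    also have "\<dots> = h1*(lam*D* s/2)/2 + D*((-lam*U1/Dt)*(h1^2-h2^2)/4 + (-lam*U2/Dt)*h1*h2/2)"
      unfolding key n1' n2' ..
    also have "\<dots> = lam*D*(h1*(s*Dt) - U1*(h1^2-h2^2) - 2*U2*h1*h2)/(4*Dt)"
      using Dtpos by (simp add: field_simps)
    also have "\<dots> = lam*D*h2*C/(4*Dt)" unfolding sD' C_def by (simp add: power2_eq_square algebra_simps)
    finally show ?thesis .
  qed
  have im': "im = lam*D*h1*C/(4*Dt)"
  proof -
    have "im = -(h2*(m*chi + 2*g*lam*nu)/2) + D*(nu2*(h1^2-h2^2)/4 - nu1*h1*h2/2)"
      unfolding im L2' S' chi' by (simp add: field_simps)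
    also have "\<dots> = -(h2*(lam*D* s/2)/2) + D*((-lam*U2/Dt)*(h1^2-h2^2)/4 - (-lam*U1/Dt)*h1*h2/2)"
      unfolding key n1' n2' ..
    also have "\<dots> = lam*D*(-h2*(s*Dt) - U2*(h1^2-h2^2) + 2*U1*h1*h2)/(4*Dt)"
      using Dtpos by (simp add: field_simps)
    also have "\<dots> = lam*D*h1*C/(4*Dt)" unfolding sD' C_def by (simp add: power2_eq_square algebra_simps)
    finally show ?thesis .
  qed
  define W where "W = D^2*(h1^2+h2^2)"
  have W: "W \<ge> 0" by (simp add: W_def)
  have lhs: "(re/2)^2 + (im/2)^2 = K*W*(C^2/(64*Dt))"
  proof -
    have "(re/2)^2 + (im/2)^2 = lam^2*W*C^2/(64*Dt^2)"
      unfolding re' im' W_def using Dtpos by (simp add: field_simps power2_eq_square)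
    also have "\<dots> = K*W*(C^2/(64*Dt))" unfolding KDt[symmetric] using Dtpos by (simp add: field_simps power2_eq_square)
    finally show ?thesis .
  qed
  have rhs: "K*D^2*(1-nu^2)^2*((h1/2)^2+(h2/2)^2)/(4*chi) * Q2 = K*W*(s^2*Q2/(16*chi))"
    unfolding W_def s_def using chipos by (simp add: field_simps power2_eq_square)
  have core: "chi*C^2 \<le> 4*Dt* s^2*Q2"
  proof -
    define p where "p = a + g*h1^2"
    define r where "r = b + g*h1*h2"
    define t where "t = c + g*h2^2"
    have u1: "t*h1 - r*h2 = U1" by (simp add: t_def r_def U1_def power2_eq_square algebra_simps)
    have u2: "p*h2 - r*h1 = U2" by (simp add: p_def r_def U2_def power2_eq_square algebra_simps)
    have det: "p*t - r^2 = Dt*chi"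
    proof -
      have "p*t - r^2 = Dt + g*(c*h1^2 - 2*b*h1*h2 + a*h2^2)"
        by (simp add: p_def t_def r_def Dt_def power2_eq_square algebra_simps)
      also have "\<dots> = Dt + g*(s*Dt)" using sD unfolding Dt_def[symmetric] s_def[symmetric] by simp
      also have "\<dots> = Dt*chi" unfolding chi' by (simp add: algebra_simps)
      finally show ?thesis .
    qed
    have T: "(p-t)^2 + 4*r^2 = 16*Q2" unfolding Q2_def p_def t_def r_def by (simp add: power2_eq_square field_simps)
    have id: "4*(s*Dt)^2*(16*Q2) - 16*(Dt*chi)*C^2 \<ge> 0"
      using poly_id[of h1 t r h2 p] unfolding u1 u2 det T C_def sD'[symmetric]
      by (metis zero_le_power2)
    then have "16*Dt*(4*Dt* s^2*Q2 - chi*C^2) \<ge> 0" by (simp add: power2_eq_square algebra_simps)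
    then show ?thesis using Dtpos by (simp add: zero_le_mult_iff)
  qed
  have "C^2/(64*Dt) \<le> s^2*Q2/(16*chi)"
    using core Dtpos chipos by (simp add: divide_simps) (simp add: algebra_simps)
  then have "K*W*(C^2/(64*Dt)) \<le> K*W*(s^2*Q2/(16*chi))"
    using K W by (intro mult_left_mono) simp_all
  then show ?thesis unfolding lhs rhs[unfolded Q2_def] by (simp add: Q2_def)
qed

lemma partR:
  fixes f1 f2 g u v :: "complex \<Rightarrow> real"
  assumes "f1 differentiable (at p)" "f2 differentiable (at p)" "g differentiable (at p)"
    "u differentiable (at p)" "v differentiable (at p)"
  shows "partial d (\<lambda>q. (f1 q - f2 q)/4 + g q * ((u q/2)^2 - (v q/2)^2)) p =
     (partial d f1 p - partial d f2 p)/4 + partial d g p * ((u p/2)^2 - (v p/2)^2)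
      + g p * (u p * partial d u p/2 - v p * partial d v p/2)"
    and "(\<lambda>q. (f1 q - f2 q)/4 + g q * ((u q/2)^2 - (v q/2)^2)) differentiable (at p)"
proof -
  note h = has_frechet[OF assms(1)] has_frechet[OF assms(2)] has_frechet[OF assms(3)]
           has_frechet[OF assms(4)] has_frechet[OF assms(5)]
  have D: "((\<lambda>q. (f1 q - f2 q)/4 + g q * ((u q/2)^2 - (v q/2)^2)) has_derivative
     (\<lambda>x. (frechet_derivative f1 (at p) x - frechet_derivative f2 (at p) x)/4
        + frechet_derivative g (at p) x * ((u p/2)^2 - (v p/2)^2)
        + g p * (u p * frechet_derivative u (at p) x/2 - v p * frechet_derivative v (at p) x/2))) (at p)"
    by (rule derivative_eq_intros h refl | simp)+ (simp add: algebra_simps power2_eq_square)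
  show "partial d (\<lambda>q. (f1 q - f2 q)/4 + g q * ((u q/2)^2 - (v q/2)^2)) p =
     (partial d f1 p - partial d f2 p)/4 + partial d g p * ((u p/2)^2 - (v p/2)^2)
      + g p * (u p * partial d u p/2 - v p * partial d v p/2)"
    using partial_has[OF D, of d] by (simp add: partial_frechet)
  show "(\<lambda>q. (f1 q - f2 q)/4 + g q * ((u q/2)^2 - (v q/2)^2)) differentiable (at p)"
    using D differentiable_def by blast
qed

lemma partJ:
  fixes f g u v :: "complex \<Rightarrow> real"
  assumes "f differentiable (at p)" "g differentiable (at p)"
    "u differentiable (at p)" "v differentiable (at p)"
  shows "partial d (\<lambda>q. - f q/2 + g q * (2*(u q/2)*(- v q/2))) p =
     - partial d f p/2 + partial d g p * (2*(u p/2)*(- v p/2))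
      - g p * (partial d u p * v p + u p * partial d v p)/2"
    and "(\<lambda>q. - f q/2 + g q * (2*(u q/2)*(- v q/2))) differentiable (at p)"
proof -
  note h = has_frechet[OF assms(1)] has_frechet[OF assms(2)] has_frechet[OF assms(3)]
           has_frechet[OF assms(4)]
  have D: "((\<lambda>q. - f q/2 + g q * (2*(u q/2)*(- v q/2))) has_derivative
     (\<lambda>x. - frechet_derivative f (at p) x/2
        + frechet_derivative g (at p) x * (2*(u p/2)*(- v p/2))
        - g p * (frechet_derivative u (at p) x * v p + u p * frechet_derivative v (at p) x)/2)) (at p)"
    by (rule derivative_eq_intros h refl | simp)+ (auto simp: fun_eq_iff field_simps)
  show "partial d (\<lambda>q. - f q/2 + g q * (2*(u q/2)*(- v q/2))) p =
     - partial d f p/2 + partial d g p * (2*(u p/2)*(- v p/2))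
      - g p * (partial d u p * v p + u p * partial d v p)/2"
    using partial_has[OF D, of d] by (simp add: partial_frechet)
  show "(\<lambda>q. - f q/2 + g q * (2*(u q/2)*(- v q/2))) differentiable (at p)"
    using D differentiable_def by blast
qed

lemma partCurv:
  fixes f1 f2 f3 :: "complex \<Rightarrow> real"
  assumes "f1 differentiable (at p)" "f2 differentiable (at p)" "f3 differentiable (at p)"
  shows "partial d (\<lambda>q. K*(f1 q*f2 q - f3 q*f3 q)) p =
     K*(partial d f1 p * f2 p + f1 p * partial d f2 p - 2 * f3 p * partial d f3 p)"
proof -
  note h = has_frechet[OF assms(1)] has_frechet[OF assms(2)] has_frechet[OF assms(3)]
  have D: "((\<lambda>q. K*(f1 q*f2 q - f3 q*f3 q)) has_derivative
     (\<lambda>x. K*(frechet_derivative f1 (at p) x * f2 p + f1 p * frechet_derivative f2 (at p) x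
        - 2 * f3 p * frechet_derivative f3 (at p) x))) (at p)"
    by (rule derivative_eq_intros h refl | simp)+ (auto simp: fun_eq_iff field_simps)
  show ?thesis using partial_has[OF D, of d] by (simp add: partial_frechet)
qed

lemma div_aux2: "(d::real) \<noteq> 0 \<Longrightarrow> x = A/d + B \<Longrightarrow> x*d = A + B*d"
  by (simp add: field_simps)

lemma amb3_pbar: "amb3 \<epsilon> w (pbar v) = amb3 \<epsilon> w v"
  by (simp add: amb3_def pbar_def)

theorem lemma7p1:
  fixes \<epsilon> K :: real and U :: "complex set" and \<psi> N :: "complex \<Rightarrow> real^4" and p :: complex
  assumes eps: "\<epsilon> = 1 \<or> \<epsilon> = -1"
    and Kpos: "K > 0"
    and U: "open U"
    and smooth: "smooth_on U \<psi>" "smooth_on U N"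
    and inM: "\<forall>q\<in>U. in_M2R \<epsilon> (\<psi> q)"
    and immersion: "\<forall>q\<in>U. inj (frechet_derivative \<psi> (at q))"
    and normal: "\<forall>q\<in>U. amb \<epsilon> (N q) (N q) = 1 \<and> amb3 \<epsilon> (N q) (\<psi> q) = 0
                    \<and> amb \<epsilon> (N q) (partial False \<psi> q) = 0 \<and> amb \<epsilon> (N q) (partial True \<psi> q) = 0"
    and conformalII: "\<forall>q\<in>U. fundII \<epsilon> \<psi> N False False q = fundII \<epsilon> \<psi> N True True q
                    \<and> fundII \<epsilon> \<psi> N False True q = 0 \<and> fundII \<epsilon> \<psi> N False False q > 0"
    and curvature: "\<forall>q\<in>U. (fundII \<epsilon> \<psi> N False False q * fundII \<epsilon> \<psi> N True True q
                              - (fundII \<epsilon> \<psi> N False True q)^2)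
                          / (fundI \<epsilon> \<psi> False False q * fundI \<epsilon> \<psi> True True q
                              - (fundI \<epsilon> \<psi> False True q)^2) = K"
    and p: "p \<in> U"
  shows "(cmod (d_zbar (Qfun \<epsilon> K \<psi> N) p))^2
          \<le> K * (deriv (gfun \<epsilon> K) (nu N p))^2 * (1 - (nu N p)^2)^2 * (cmod (h_z \<psi> p))^2
             / (4 * chi \<epsilon> K (nu N p)) * (cmod (Qfun \<epsilon> K \<psi> N p))^2"
proof -
  note s\<psi> = smooth(1) and sN = smooth(2)
  define X where "X = partial False \<psi>"
  define Y where "Y = partial True \<psi>"
  have sX: "smooth_on U X" and sY: "smooth_on U Y" using smooth_partial[OF s\<psi>] by (auto simp: X_def Y_def)
  have d\<psi>: "\<And>q. q \<in> U \<Longrightarrow> \<psi> differentiable (at q)" using smooth_diff0[OF s\<psi>] by blast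
  have dN: "\<And>q. q \<in> U \<Longrightarrow> N differentiable (at q)" using smooth_diff0[OF sN] by blast
  have dX: "\<And>q. q \<in> U \<Longrightarrow> X differentiable (at q)" using smooth_diff0[OF sX] by blast
  have dY: "\<And>q. q \<in> U \<Longrightarrow> Y differentiable (at q)" using smooth_diff0[OF sY] by blast
  have dXd: "\<And>q d. q \<in> U \<Longrightarrow> partial d X differentiable (at q)" using smooth_diff0[OF smooth_partial[OF sX]] by blast
  have dYd: "\<And>q d. q \<in> U \<Longrightarrow> partial d Y differentiable (at q)" using smooth_diff0[OF smooth_partial[OF sY]] by blast
  have dNd: "\<And>q d. q \<in> U \<Longrightarrow> partial d N differentiable (at q)" using smooth_diff0[OF smooth_partial[OF sN]] by blast
  have p\<psi>: "\<And>d. partial d \<psi> = (if d then Y else X)" by (auto simp: X_def Y_def)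
  have S1U: "\<And>q. q \<in> U \<Longrightarrow> partial True X q = partial False Y q"
    unfolding X_def Y_def using schwarz_smooth[OF U s\<psi>] by blast
  have S2: "partial False (partial True Y) p = partial True (partial True X) p"
  proof -
    have "partial False (partial True Y) p = partial True (partial False Y) p"
      using schwarz_smooth[OF U sY p] by simp
    also have "\<dots> = partial True (partial True X) p"
      using partial_local[OF U p, of "partial False Y" "partial True X"] S1U by metis
    finally show ?thesis .
  qed
  have S3: "partial True (partial False X) p = partial False (partial True X) p"
    using schwarz_smooth[OF U sX p] by simp
  have NN: "\<And>q. q \<in> U \<Longrightarrow> amb \<epsilon> (N q) (N q) = 1" using normal by blast
  have N\<psi>: "\<And>q. q \<in> U \<Longrightarrow> amb3 \<epsilon> (N q) (\<psi> q) = 0" using normal by blast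
  have NX: "\<And>q. q \<in> U \<Longrightarrow> amb \<epsilon> (N q) (X q) = 0" using normal by (auto simp: X_def)
  have NY: "\<And>q. q \<in> U \<Longrightarrow> amb \<epsilon> (N q) (Y q) = 0" using normal by (auto simp: Y_def)
  have \<psi>\<psi>: "\<And>q. q \<in> U \<Longrightarrow> amb3 \<epsilon> (\<psi> q) (\<psi> q) = \<epsilon>" using inM by (auto simp: in_M2R_def)
  have U2: "amb3 \<epsilon> (partial d \<psi> q) (\<psi> q) = 0" if q: "q \<in> U" for q d
  proof -
    have "partial d (\<lambda>q. amb3 \<epsilon> (\<psi> q) (\<psi> q)) q = 0" by (rule partial_zero_on[OF U q \<psi>\<psi>])
    then have "amb3 \<epsilon> (partial d \<psi> q) (\<psi> q) + amb3 \<epsilon> (\<psi> q) (partial d \<psi> q) = 0"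
      using partial_amb3[OF d\<psi>[OF q] d\<psi>[OF q]] by simp
    then show ?thesis by (simp add: amb3_sym)
  qed
  have U4X: "amb \<epsilon> (partial e N q) (X q) + amb \<epsilon> (N q) (partial e X q) = 0" if q: "q \<in> U" for q e
  proof -
    have "partial e (\<lambda>q. amb \<epsilon> (N q) (X q)) q = 0" by (rule partial_zero_on[OF U q NX])
    then show ?thesis using partial_amb(1)[OF dN[OF q] dX[OF q]] by simp
  qed
  have U4Y: "amb \<epsilon> (partial e N q) (Y q) + amb \<epsilon> (N q) (partial e Y q) = 0" if q: "q \<in> U" for q e
  proof -
    have "partial e (\<lambda>q. amb \<epsilon> (N q) (Y q)) q = 0" by (rule partial_zero_on[OF U q NY])
    then show ?thesis using partial_amb(1)[OF dN[OF q] dY[OF q]] by simp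
  qed
  have IIX: "fundII \<epsilon> \<psi> N False e q = amb \<epsilon> (N q) (partial e X q)" if q: "q \<in> U" for q e
    using U4X[OF q, of e] by (simp add: fundII_def X_def[symmetric] amb_sym)
  have IIY: "fundII \<epsilon> \<psi> N True e q = amb \<epsilon> (N q) (partial e Y q)" if q: "q \<in> U" for q e
    using U4Y[OF q, of e] by (simp add: fundII_def Y_def[symmetric] amb_sym)
  define lamf where "lamf = fundII \<epsilon> \<psi> N False False"
  have lamU1: "\<And>q. q \<in> U \<Longrightarrow> lamf q = amb \<epsilon> (N q) (partial False X q)" using IIX by (simp add: lamf_def)
  have lamU2: "\<And>q. q \<in> U \<Longrightarrow> lamf q = amb \<epsilon> (N q) (partial True Y q)" using IIY conformalII by (simp add: lamf_def)
  have zeroU: "\<And>q. q \<in> U \<Longrightarrow> amb \<epsilon> (N q) (partial True X q) = 0" using IIX conformalII by metis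
  have dlam: "lamf differentiable (at p)"
    using diff_local[OF U p, of lamf "\<lambda>q. amb \<epsilon> (N q) (partial False X q)"] lamU1 partial_amb(2)[OF dN[OF p] dXd[OF p]] by blast
  have LF: "partial d lamf p = amb \<epsilon> (partial d N p) (partial False X p) + amb \<epsilon> (N p) (partial d (partial False X) p)" for d
    using partial_local[OF U p lamU1] partial_amb(1)[OF dN[OF p] dXd[OF p]] by simp
  have LT: "partial d lamf p = amb \<epsilon> (partial d N p) (partial True Y p) + amb \<epsilon> (N p) (partial d (partial True Y) p)" for d
    using partial_local[OF U p lamU2] partial_amb(1)[OF dN[OF p] dYd[OF p]] by simp
  have LZ: "0 = amb \<epsilon> (partial d N p) (partial True X p) + amb \<epsilon> (N p) (partial d (partial True X) p)" for d
    using partial_zero_on[OF U p, of "\<lambda>q. amb \<epsilon> (N q) (partial True X q)" 0 d] zeroU partial_amb(1)[OF dN[OF p] dXd[OF p]] by simp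
  define I11 where "I11 = (\<lambda>q. amb \<epsilon> (X q) (X q))"
  define I12 where "I12 = (\<lambda>q. amb \<epsilon> (X q) (Y q))"
  define I22 where "I22 = (\<lambda>q. amb \<epsilon> (Y q) (Y q))"
  have curvU: "lamf q * lamf q = K * (I11 q * I22 q - I12 q * I12 q) \<and> I11 q * I22 q - I12 q * I12 q \<noteq> 0" if q: "q \<in> U" for q
  proof -
    have c: "(lamf q * lamf q - 0^2) / (I11 q * I22 q - (I12 q)^2) = K"
      using curvature q conformalII by (simp add: lamf_def I11_def I12_def I22_def fundI_def X_def Y_def)
    then have "I11 q * I22 q - (I12 q)^2 \<noteq> 0" using Kpos by auto
    then show ?thesis using c by (simp add: power2_eq_square field_simps)
  qed
  have dI11: "I11 differentiable (at p)" unfolding I11_def by (rule partial_amb(2)[OF dX[OF p] dX[OF p]])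
  have dI12: "I12 differentiable (at p)" unfolding I12_def by (rule partial_amb(2)[OF dX[OF p] dY[OF p]])
  have dI22: "I22 differentiable (at p)" unfolding I22_def by (rule partial_amb(2)[OF dY[OF p] dY[OF p]])
  have pI11: "partial d I11 p = 2 * amb \<epsilon> (partial d X p) (X p)" for d
    unfolding I11_def using partial_amb(1)[OF dX[OF p] dX[OF p]] by (simp add: amb_sym)
  have pI12: "partial d I12 p = amb \<epsilon> (partial d X p) (Y p) + amb \<epsilon> (X p) (partial d Y p)" for d
    unfolding I12_def using partial_amb(1)[OF dX[OF p] dY[OF p]] by simp
  have pI22: "partial d I22 p = 2 * amb \<epsilon> (partial d Y p) (Y p)" for d
    unfolding I22_def using partial_amb(1)[OF dY[OF p] dY[OF p]] by (simp add: amb_sym)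
  have curvD: "2 * lamf p * partial d lamf p = K*(partial d I11 p * I22 p + I11 p * partial d I22 p - 2*I12 p*partial d I12 p)" for d
  proof -
    have "partial d (\<lambda>q. lamf q * lamf q) p = partial d (\<lambda>q. K*(I11 q*I22 q - I12 q*I12 q)) p"
      by (rule partial_local[OF U p]) (use curvU in blast)
    then show ?thesis using partial_mult[OF dlam dlam] partCurv[OF dI11 dI22 dI12] by simp
  qed
  have NNd: "amb \<epsilon> (partial d N p) (N p) = 0" for d
  proof -
    have "partial d (\<lambda>q. amb \<epsilon> (N q) (N q)) p = 0" by (rule partial_zero_on[OF U p NN])
    then show ?thesis using partial_amb(1)[OF dN[OF p] dN[OF p]] by (simp add: amb_sym)
  qed
  have N\<psi>d: "amb3 \<epsilon> (partial d N p) (\<psi> p) + amb3 \<epsilon> (N p) (partial d \<psi> p) = 0" for d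
  proof -
    have "partial d (\<lambda>q. amb3 \<epsilon> (N q) (\<psi> q)) p = 0" by (rule partial_zero_on[OF U p N\<psi>])
    then show ?thesis using partial_amb3[OF dN[OF p] d\<psi>[OF p]] by simp
  qed
  have U2X: "amb3 \<epsilon> (partial e X p) (\<psi> p) + amb3 \<epsilon> (X p) (partial e \<psi> p) = 0" for e
  proof -
    have "partial e (\<lambda>q. amb3 \<epsilon> (X q) (\<psi> q)) p = 0"
      by (rule partial_zero_on[OF U p]) (use U2[of _ False] in \<open>simp add: X_def\<close>)
    then show ?thesis using partial_amb3[OF dX[OF p] d\<psi>[OF p]] by simp
  qed
  have U2Y: "amb3 \<epsilon> (partial e Y p) (\<psi> p) + amb3 \<epsilon> (Y p) (partial e \<psi> p) = 0" for e
  proof -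
    have "partial e (\<lambda>q. amb3 \<epsilon> (Y q) (\<psi> q)) p = 0"
      by (rule partial_zero_on[OF U p]) (use U2[of _ True] in \<open>simp add: Y_def\<close>)
    then show ?thesis using partial_amb3[OF dY[OF p] d\<psi>[OF p]] by simp
  qed
  define a where "a = I11 p"
  define b where "b = I12 p"
  define c where "c = I22 p"
  define lam where "lam = lamf p"
  define P11 where "P11 = partial False X p"
  define P12 where "P12 = partial True X p"
  define P22 where "P22 = partial True Y p"
  define NF where "NF = partial False N p"
  define NT where "NT = partial True N p"
  define pb where "pb = pbar (\<psi> p)"
  define h1 where "h1 = X p $ 4"
  define h2 where "h2 = Y p $ 4"
  define nu0 where "nu0 = N p $ 4"
  have P12': "partial False Y p = P12" using S1U[OF p] by (simp add: P12_def)
  have Dt: "a*c - b^2 \<noteq> 0" using curvU[OF p] by (simp add: a_def b_def c_def power2_eq_square)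
  have lamsq: "lam^2 = K*(a*c - b^2)" using curvU[OF p] by (simp add: lam_def a_def b_def c_def power2_eq_square)
  have lampos: "lam > 0" using conformalII p unfolding lam_def lamf_def by blast
  have FR: "amb \<epsilon> w u = (c * amb \<epsilon> w (X p) * amb \<epsilon> u (X p) - b * (amb \<epsilon> w (X p) * amb \<epsilon> u (Y p) + amb \<epsilon> w (Y p) * amb \<epsilon> u (X p))
            + a * amb \<epsilon> w (Y p) * amb \<epsilon> u (Y p)) / (a*c - b^2) + amb \<epsilon> w (N p) * amb \<epsilon> u (N p) + \<epsilon> * amb \<epsilon> w pb * amb \<epsilon> u pb" for w u
  proof (rule frame[OF eps])
    show "amb \<epsilon> (X p) (X p) = a" "amb \<epsilon> (X p) (Y p) = b" "amb \<epsilon> (Y p) (Y p) = c"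
      by (simp_all add: a_def b_def c_def I11_def I12_def I22_def)
    show "a*c - b^2 \<noteq> 0" by (rule Dt)
    show "amb \<epsilon> (X p) (N p) = 0" "amb \<epsilon> (Y p) (N p) = 0" "amb \<epsilon> (N p) (N p) = 1"
      using NX[OF p] NY[OF p] NN[OF p] by (simp_all add: amb_sym)
    show "amb \<epsilon> (X p) pb = 0" "amb \<epsilon> (Y p) pb = 0"
      using U2[OF p, of False] U2[OF p, of True] by (simp_all add: pb_def pbar_amb X_def Y_def)
    show "amb \<epsilon> (N p) pb = 0" "amb \<epsilon> pb pb = \<epsilon>"
      using N\<psi>[OF p] \<psi>\<psi>[OF p] by (simp_all add: pb_def pbar_amb amb3_pbar amb3_sym[of _ "pbar _"])
  qed
  have vNFX: "amb \<epsilon> NF (X p) = -lam" using conformalII p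
    by (simp add: lam_def lamf_def fundII_def NF_def X_def amb_sym)
  have vNTX: "amb \<epsilon> NT (X p) = 0" using conformalII p
    by (simp add: fundII_def NT_def X_def amb_sym)
  have vNTY: "amb \<epsilon> NT (Y p) = -lam" using conformalII p
    by (simp add: lam_def lamf_def fundII_def NT_def Y_def amb_sym)
  have vNFY: "amb \<epsilon> NF (Y p) = 0" using U4Y[OF p, of False] zeroU[OF p] P12' by (simp add: NF_def P12_def)
  have vNFN: "amb \<epsilon> NF (N p) = 0" "amb \<epsilon> NT (N p) = 0" using NNd by (simp_all add: NF_def NT_def)
  have vNFpb: "amb \<epsilon> NF pb = nu0 * h1" using N\<psi>d[of False] NX[OF p]
    by (simp add: NF_def pb_def pbar_amb amb3_amb nu0_def h1_def X_def)
  have vNTpb: "amb \<epsilon> NT pb = nu0 * h2" using N\<psi>d[of True] NY[OF p]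
    by (simp add: NT_def pb_def pbar_amb amb3_amb nu0_def h2_def Y_def)
  have vPN: "amb \<epsilon> P11 (N p) = lam" "amb \<epsilon> P22 (N p) = lam" "amb \<epsilon> P12 (N p) = 0"
    using U4X[OF p, of False] U4Y[OF p, of True] zeroU[OF p] vNFX vNTY
    by (simp_all add: P11_def P22_def P12_def NF_def NT_def amb_sym)
  have vPpb: "amb \<epsilon> P11 pb = -(a - h1*h1)" "amb \<epsilon> P12 pb = -(b - h1*h2)" "amb \<epsilon> P22 pb = -(c - h2*h2)"
    using U2X[of False] U2X[of True] U2Y[of True]
    by (simp_all add: P11_def P12_def P22_def pb_def pbar_amb amb3_amb a_def b_def c_def I11_def I12_def I22_def
        h1_def h2_def X_def[symmetric] Y_def[symmetric] algebra_simps)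
  define G111 where "G111 = amb \<epsilon> P11 (X p)"
  define G112 where "G112 = amb \<epsilon> P11 (Y p)"
  define G121 where "G121 = amb \<epsilon> P12 (X p)"
  define G122 where "G122 = amb \<epsilon> P12 (Y p)"
  define G221 where "G221 = amb \<epsilon> P22 (X p)"
  define G222 where "G222 = amb \<epsilon> P22 (Y p)"
  define lamF where "lamF = partial False lamf p"
  define lamT where "lamT = partial True lamf p"
  have curvF: "2*lam*lamF = K*(2*G111*c + a*(2*G122) - 2*b*(G112 + G121))"
    using curvD[of False] pI11[of False] pI22[of False] pI12[of False] P12'
    by (simp add: lam_def lamF_def a_def b_def c_def G111_def G112_def G121_def G122_def P11_def amb_sym[of _ "X p"] algebra_simps)
  have curvT: "2*lam*lamT = K*(2*G121*c + a*(2*G222) - 2*b*(G122 + G221))"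
    using curvD[of True] pI11[of True] pI22[of True] pI12[of True]
    by (simp add: lam_def lamT_def a_def b_def c_def G121_def G222_def G122_def G221_def P12_def P22_def amb_sym[of _ "X p"] algebra_simps)
  have codF0: "lamF = amb \<epsilon> NF P22 - amb \<epsilon> NT P12"
    using LT[of False] LZ[of True] S2 by (simp add: lamF_def NF_def NT_def P22_def P12_def)
  have codT0: "lamT = amb \<epsilon> NT P11 - amb \<epsilon> NF P12"
    using LF[of True] LZ[of False] S3 by (simp add: lamT_def NF_def NT_def P11_def P12_def)
  note vals = vNFX vNTX vNTY vNFY vNFN vNFpb vNTpb vPN vPpb
  have eNF22: "amb \<epsilon> NF P22 = (c*(-lam)*G221 - b*((-lam)*G222 + 0*G221) + a*0*G222)/(a*c-b^2) + \<epsilon>*(nu0*h1)*(-(c - h2*h2))"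
    using FR[of NF P22] by (simp add: vals G221_def G222_def)
  have eNT12: "amb \<epsilon> NT P12 = (c*0*G121 - b*(0*G122 + (-lam)*G121) + a*(-lam)*G122)/(a*c-b^2) + \<epsilon>*(nu0*h2)*(-(b - h1*h2))"
    using FR[of NT P12] by (simp add: vals G121_def G122_def)
  have eNT11: "amb \<epsilon> NT P11 = (c*0*G111 - b*(0*G112 + (-lam)*G111) + a*(-lam)*G112)/(a*c-b^2) + \<epsilon>*(nu0*h2)*(-(a - h1*h1))"
    using FR[of NT P11] by (simp add: vals G111_def G112_def)
  have eNF12: "amb \<epsilon> NF P12 = (c*(-lam)*G121 - b*((-lam)*G122 + 0*G121) + a*0*G122)/(a*c-b^2) + \<epsilon>*(nu0*h1)*(-(b - h1*h2))"
    using FR[of NF P12] by (simp add: vals G121_def G122_def)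
  have cod: "(G111 + G221) * lam^2 = -\<epsilon>*nu0*lam*h1*(a*c-b^2) \<and> (G112 + G222) * lam^2 = -\<epsilon>*nu0*lam*h2*(a*c-b^2)"
    by (rule codazzi_alg[OF Dt _ lamsq curvF curvT codF0[unfolded eNF22 eNT12] codT0[unfolded eNT11 eNF12]])
       (use lampos in simp)
  have e4pb: "amb \<epsilon> e4 pb = 0" by (simp add: e4_amb pb_def pbar_def)
  have pb4: "pb $ 4 = 0" by (simp add: pb_def pbar_def)
  have e4v: "amb \<epsilon> e4 (X p) = h1" "amb \<epsilon> e4 (Y p) = h2" "amb \<epsilon> e4 (N p) = nu0" "amb \<epsilon> e4 e4 = 1"
    by (simp_all add: e4_amb h1_def h2_def nu0_def) (simp add: e4_def)
  have sD: "(1-nu0^2)*(a*c - b^2) = c*h1^2 - 2*b*h1*h2 + a*h2^2"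
  proof -
    have "1 = (c*h1*h1 - b*(h1*h2 + h2*h1) + a*h2*h2)/(a*c-b^2) + nu0*nu0"
      using FR[of e4 e4] by (simp add: e4v e4pb)
    then show ?thesis using Dt by (simp add: field_simps power2_eq_square)
  qed
  define nu1 where "nu1 = NF $ 4"
  define nu2 where "nu2 = NT $ 4"
  have n1: "nu1*(a*c-b^2) = -lam*(c*h1 - b*h2)"
  proof -
    have "nu1 = (c*(-lam)*h1 - b*((-lam)*h2 + 0*h1) + a*0*h2)/(a*c-b^2)"
      using FR[of NF e4] by (simp add: vals e4v e4pb nu1_def e4_amb h1_def h2_def nu0_def pb4)
    then show ?thesis using Dt by (simp add: field_simps)
  qed
  have n2: "nu2*(a*c-b^2) = -lam*(a*h2 - b*h1)"
  proof -
    have "nu2 = (c*0*h1 - b*(0*h2 + (-lam)*h1) + a*(-lam)*h2)/(a*c-b^2)"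
      using FR[of NT e4] by (simp add: vals e4v e4pb nu2_def e4_amb h1_def h2_def nu0_def pb4)
    then show ?thesis using Dt by (simp add: field_simps)
  qed
  define H11 where "H11 = P11 $ 4"
  define H12 where "H12 = P12 $ 4"
  define H22 where "H22 = P22 $ 4"
  define L1 where "L1 = G111 + G221"
  define L2 where "L2 = G112 + G222"
  have Sfr: "(H11 + H22)*(a*c-b^2) = c*L1*h1 - b*(L1*h2 + L2*h1) + a*L2*h2 + 2*lam*nu0*(a*c-b^2)"
  proof -
    have 1: "H11 = (c*G111*h1 - b*(G111*h2 + G112*h1) + a*G112*h2)/(a*c-b^2) + lam*nu0"
      using FR[of P11 e4] by (simp add: vals e4v e4pb H11_def G111_def G112_def e4_amb h1_def h2_def nu0_def pb4)
    have 2: "H22 = (c*G221*h1 - b*(G221*h2 + G222*h1) + a*G222*h2)/(a*c-b^2) + lam*nu0"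
      using FR[of P22 e4] by (simp add: vals e4v e4pb H22_def G221_def G222_def e4_amb h1_def h2_def nu0_def pb4)
    have "(H11 + H22)*(a*c-b^2) = H11*(a*c-b^2) + H22*(a*c-b^2)" by (simp add: algebra_simps)
    also have "\<dots> = (c*G111*h1 - b*(G111*h2 + G112*h1) + a*G112*h2) + lam*nu0*(a*c-b^2)
       + ((c*G221*h1 - b*(G221*h2 + G222*h1) + a*G222*h2) + lam*nu0*(a*c-b^2))"
      using div_aux2[OF Dt 1] div_aux2[OF Dt 2] by simp
    also have "\<dots> = c*L1*h1 - b*(L1*h2 + L2*h1) + a*L2*h2 + 2*lam*nu0*(a*c-b^2)"
      unfolding L1_def L2_def by (simp add: algebra_simps)
    finally show ?thesis .
  qed
  define hx where "hx = partial False (height \<psi>)"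
  define hy where "hy = partial True (height \<psi>)"
  have hfun: "height \<psi> = (\<lambda>q. \<psi> q $ 4)" by (rule ext) (simp add: height_def)
  have hxU: "\<And>q. q \<in> U \<Longrightarrow> hx q = X q $ 4" using partial_nth[OF d\<psi>] by (simp add: hx_def hfun X_def)
  have hyU: "\<And>q. q \<in> U \<Longrightarrow> hy q = Y q $ 4" using partial_nth[OF d\<psi>] by (simp add: hy_def hfun Y_def)
  have dhx: "hx differentiable (at p)"
    using diff_local[OF U p, of hx "\<lambda>q. X q $ 4"] hxU diff_nth[OF dX[OF p]] by blast
  have dhy: "hy differentiable (at p)"
    using diff_local[OF U p, of hy "\<lambda>q. Y q $ 4"] hyU diff_nth[OF dY[OF p]] by blast
  have phx: "partial d hx p = partial d X p $ 4" for d
    using partial_local[OF U p, of hx "\<lambda>q. X q $ 4"] hxU partial_nth[OF dX[OF p]] by metis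
  have phy: "partial d hy p = partial d Y p $ 4" for d
    using partial_local[OF U p, of hy "\<lambda>q. Y q $ 4"] hyU partial_nth[OF dY[OF p]] by metis
  have hxp: "hx p = h1" "hy p = h2" using hxU[OF p] hyU[OF p] by (simp_all add: h1_def h2_def)
  have nufun: "nu N = (\<lambda>q. N q $ 4)" by (rule ext) (simp add: nu_def)
  have dnu: "nu N differentiable (at p)" unfolding nufun by (rule diff_nth[OF dN[OF p]])
  have pnu: "partial d (nu N) p = partial d N p $ 4" for d unfolding nufun by (rule partial_nth[OF dN[OF p]])
  have nup: "nu N p = nu0" by (simp add: nu_def nu0_def)
  obtain Dg where Dg: "(gfun \<epsilon> K has_real_derivative Dg) (at nu0)"
    and ode: "Dg * (1 - nu0^2) / 2 = nu0 * (2 * gfun \<epsilon> K nu0 - \<epsilon> * chi \<epsilon> K nu0 / K)"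
    using gfun_deriv[OF eps Kpos] by blast
  define gn where "gn = (\<lambda>q. gfun \<epsilon> K (nu N q))"
  have dgn: "gn differentiable (at p)" unfolding gn_def using partial_chain(2)[OF Dg[folded nup] dnu] .
  have pgn: "partial d gn p = Dg * (partial d N p $ 4)" for d
    unfolding gn_def using partial_chain(1)[OF Dg[folded nup] dnu] pnu by simp
  define g where "g = gfun \<epsilon> K nu0"
  have gnp: "gn p = g" by (simp add: gn_def g_def nup)
  define R where "R = (\<lambda>q. (I11 q - I22 q)/4 + gn q * ((hx q/2)^2 - (hy q/2)^2))"
  define J where "J = (\<lambda>q. - I12 q/2 + gn q * (2*(hx q/2)*(- hy q/2)))"
  have Qeq: "Qfun \<epsilon> K \<psi> N = (\<lambda>q. Complex (R q) (J q))"
    by (rule ext) (simp add: Qfun_def Ecoef_def h_z_def R_def J_def gn_def I11_def I12_def I22_def fundI_def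
        X_def Y_def hx_def hy_def complex_eq_iff power2_eq_square algebra_simps)
  have pR: "partial d R p = (partial d I11 p - partial d I22 p)/4 + partial d gn p * ((hx p/2)^2 - (hy p/2)^2)
      + gn p * (hx p * partial d hx p/2 - hy p * partial d hy p/2)" for d
    unfolding R_def by (rule partR(1)[OF dI11 dI22 dgn dhx dhy])
  have dR: "R differentiable (at p)" unfolding R_def by (rule partR(2)[OF dI11 dI22 dgn dhx dhy])
  have pJ: "partial d J p = - partial d I12 p/2 + partial d gn p * (2*(hx p/2)*(- hy p/2))
      - gn p * (partial d hx p * hy p + hx p * partial d hy p)/2" for d
    unfolding J_def by (rule partJ(1)[OF dI12 dgn dhx dhy])
  have dJ: "J differentiable (at p)" unfolding J_def by (rule partJ(2)[OF dI12 dgn dhx dhy])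
  have dz: "d_zbar (Qfun \<epsilon> K \<psi> N) p = (Complex (partial False R p) (partial False J p) + \<i> * Complex (partial True R p) (partial True J p))/2"
    unfolding d_zbar_def Qeq using partial_Complex[OF dR dJ] by simp
  define re where "re = partial False R p - partial True J p"
  define im where "im = partial False J p + partial True R p"
  have lhs: "(cmod (d_zbar (Qfun \<epsilon> K \<psi> N) p))^2 = (re/2)^2 + (im/2)^2"
    unfolding dz cmod_power2 re_def im_def by (simp add: power2_eq_square field_simps)
  have ambXP22: "amb \<epsilon> (X p) P22 = G221" by (simp add: G221_def amb_sym)
  have ambXP12: "amb \<epsilon> (X p) P12 = G121" by (simp add: G121_def amb_sym)
  note pvals = pR pJ pI11 pI12 pI22 pgn phx phy hxp gnp P12'
  have reeq: "re = L1/2 + Dg*(nu1*(h1^2-h2^2)/4 + nu2*h1*h2/2) + g*h1*(H11+H22)/2"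
    unfolding re_def pvals
    by (simp add: P11_def[symmetric] P12_def[symmetric] P22_def[symmetric] NF_def[symmetric] NT_def[symmetric]
        ambXP22 ambXP12 G111_def[symmetric] G122_def[symmetric] L1_def nu1_def[symmetric] nu2_def[symmetric]
        H11_def[symmetric] H12_def[symmetric] H22_def[symmetric] field_simps power2_eq_square)
  have imeq: "im = -L2/2 + Dg*(nu2*(h1^2-h2^2)/4 - nu1*h1*h2/2) - g*h2*(H11+H22)/2"
    unfolding im_def pvals
    by (simp add: P11_def[symmetric] P12_def[symmetric] P22_def[symmetric] NF_def[symmetric] NT_def[symmetric]
        ambXP22 ambXP12 G112_def[symmetric] G121_def[symmetric] G222_def[symmetric] L2_def nu1_def[symmetric] nu2_def[symmetric]
        H11_def[symmetric] H12_def[symmetric] H22_def[symmetric] field_simps power2_eq_square)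
  define chv where "chv = chi \<epsilon> K nu0"
  have chv: "chv = 1 + g*(1-nu0^2)" unfolding chv_def g_def by (rule chi_Gf[OF eps Kpos])
  have chvpos: "chv > 0" unfolding chv_def by (rule chi_pos[OF eps Kpos])
  have ode': "Dg*(1-nu0^2)/2 = nu0*(2*g - \<epsilon>*chv/K)" using ode by (simp add: g_def chv_def)
  have c1: "L1*lam^2 = -\<epsilon>*nu0*lam*h1*(a*c-b^2)" using cod by (simp add: L1_def)
  have c2: "L2*lam^2 = -\<epsilon>*nu0*lam*h2*(a*c-b^2)" using cod by (simp add: L2_def)
  have main: "(re/2)^2 + (im/2)^2 \<le> K*Dg^2*(1-nu0^2)^2*((h1/2)^2+(h2/2)^2)/(4*chv)
           * (((a-c)/4 + g*(h1^2-h2^2)/4)^2 + (-b/2 - g*h1*h2/2)^2)"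
    by (rule final_alg[OF lamsq lampos Kpos chv chvpos sD ode' c1 c2 Sfr n1 n2 reeq imeq])
  have der: "deriv (gfun \<epsilon> K) nu0 = Dg" using DERIV_imp_deriv[OF Dg] by simp
  have hz: "(cmod (h_z \<psi> p))^2 = (h1/2)^2 + (h2/2)^2"
    using hxp by (simp add: h_z_def cmod_power2 hx_def[symmetric] hy_def[symmetric])
  have Qp: "(cmod (Qfun \<epsilon> K \<psi> N p))^2 = ((a-c)/4 + g*(h1^2-h2^2)/4)^2 + (-b/2 - g*h1*h2/2)^2"
    unfolding Qeq cmod_power2 using hxp gnp
    by (simp add: R_def J_def a_def b_def c_def field_simps power2_eq_square)
  show ?thesis unfolding lhs hz Qp nup der using main by (simp add: chv_def)
qed

end
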